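(* Under the standing setup (with $f$ possibly unbounded), for every $u_0\in\mathbb R^d$ the function $u\colon[0,\infty)\to\mathbb R^d$, $u(t):=\mathscr S(t)u_0$, is the unique classical solution $u\in C^1([0,\infty);\mathbb R^d)$ of the initial value problem $u'(t)=\mathcal Qu(t)$ for $t\ge0$, $u(0)=u_0$. Moreover, the Nisio semigroup $\mathscr S$ is uniformly continuous, i.e. $\mathscr S(h)\to I$ uniformly on compact subsets of $\mathbb R^d$ as $h\searrow0$.
   Context: Standing setup: $d\in\mathbb N$; vectors in $\mathbb R^d$ with $\|u\|_\infty=\max_i|u_i|$; inequalities and suprema of vectors are componentwise; reals are identified with constant vectors. A $Q$-matrix is $q\in\mathbb R^{d\times d}$ with $q_{ii}\le0$, $q_{ij}\ge0$ ($i\ne j$), $\sum_jq_{ij}=0$. Let $\mathcal P$ be a set of $Q$-matrices and $f=(f_q)_{q\in\mathcal P}\subset\mathbb R^d$ with $\sup_{q\in\mathcal P}f_q=f_{q_0}=0$ for some $q_0\in\mathcal P$, such that $\mathcal Qu:=\sup_{q\in\mathcal P}(qu+f_q)$ is finite for every $u\in\mathbb R^d$. For $q\in\mathcal P$, $t\ge0$: $S_q(t)u_0:=e^{tq}u_0+\int_0^te^{sq}f_q\,ds$. For $h\ge0$: $\mathcal E_hu_0:=\sup_{q\in\mathcal P}S_q(h)u_0$. $P$ is the set of finite subsets $\pi\subset[0,\infty)$ with $0\in\pi$; $P_t:=\{\pi\in P:\max\pi=t\}$. For $\pi=\{t_0,\dots,t_m\}$ with $0=t_0<\dots<t_m$,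 $m\ge1$, $\mathcal E_\pi:=\mathcal E_{t_1-t_0}\circ\cdots\circ\mathcal E_{t_m-t_{m-1}}$, and $\mathcal E_{\{0\}}:=\mathcal E_0$. The Nisio semigroup of $(\mathcal P,f)$ is $\mathscr S(t)u_0:=\sup_{\pi\in P_t}\mathcal E_\pi u_0$. *)

theory Defs
  imports "HOL-Analysis.Analysis"
begin

text \<open>Dimension d is represented by a finite index type 'n (d = CARD('n)).
  Vectors are real^'n, d x d matrices are real^'n^'n.\<close>

definition is_Q_matrix :: "real^'n^'n \<Rightarrow> bool" where
  "is_Q_matrix q \<longleftrightarrow>
     (\<forall>i. q $ i $ i \<le> 0) \<and> (\<forall>i j. i \<noteq> j \<longrightarrow> q $ i $ j \<ge> 0) \<and>
     (\<forall>i. (\<Sum>j\<in>UNIV. q $ i $ j) = 0)"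

primrec mpow :: "real^'n^'n \<Rightarrow> nat \<Rightarrow> real^'n^'n" where
  "mpow A 0 = mat 1"
| "mpow A (Suc k) = A ** mpow A k"

definition mexp :: "real^'n^'n \<Rightarrow> real^'n^'n" where
  "mexp A = (\<Sum>k. (1 / fact k) *\<^sub>R mpow A k)"

definition vsup :: "'a set \<Rightarrow> ('a \<Rightarrow> real^'n) \<Rightarrow> real^'n" where
  "vsup A g = (\<chi> i. SUP a\<in>A. g a $ i)"

definition Sq :: "real^'n^'n \<Rightarrow> real^'n \<Rightarrow> real \<Rightarrow> real^'n \<Rightarrow> real^'n" where
  "Sq q fq t u0 = mexp (t *\<^sub>R q) *v u0 + integral {0..t} (\<lambda>s. mexp (s *\<^sub>R q) *v fq)"

definition Qop :: "(real^'n^'n) set \<Rightarrow> (real^'n^'n \<Rightarrow> real^'n) \<Rightarrow> real^'n \<Rightarrow> real^'n" where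
  "Qop P f u = vsup P (\<lambda>q. q *v u + f q)"

definition Eop :: "(real^'n^'n) set \<Rightarrow> (real^'n^'n \<Rightarrow> real^'n) \<Rightarrow> real \<Rightarrow> real^'n \<Rightarrow> real^'n" where
  "Eop P f h u0 = vsup P (\<lambda>q. Sq q (f q) h u0)"

definition partitions :: "real set set" where
  "partitions = {\<pi>. finite \<pi> \<and> \<pi> \<subseteq> {0..} \<and> 0 \<in> \<pi>}"

definition partitions_at :: "real \<Rightarrow> real set set" where
  "partitions_at t = {\<pi> \<in> partitions. Max \<pi> = t}"

fun Ecomp :: "(real^'n^'n) set \<Rightarrow> (real^'n^'n \<Rightarrow> real^'n) \<Rightarrow> real list \<Rightarrow> real^'n \<Rightarrow> real^'n" where
  "Ecomp P f [] = id"
| "Ecomp P f (h # hs) = Eop P f h \<circ> Ecomp P f hs"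

text \<open>For \<pi> = {t_0 < ... < t_m}, m \<ge> 1: E_\<pi> = E_{t_1-t_0} o ... o E_{t_m-t_{m-1}};
  E_{{0}} = E_0.\<close>
definition Epi :: "(real^'n^'n) set \<Rightarrow> (real^'n^'n \<Rightarrow> real^'n) \<Rightarrow> real set \<Rightarrow> real^'n \<Rightarrow> real^'n" where
  "Epi P f \<pi> = (if \<pi> = {0} then Eop P f 0
     else (let ts = sorted_list_of_set \<pi> in Ecomp P f (map2 (-) (tl ts) ts)))"

definition nisio :: "(real^'n^'n) set \<Rightarrow> (real^'n^'n \<Rightarrow> real^'n) \<Rightarrow> real \<Rightarrow> real^'n \<Rightarrow> real^'n" where
  "nisio P f t u0 = vsup (partitions_at t) (\<lambda>\<pi>. Epi P f \<pi> u0)"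

definition classical_solution :: "(real^'n \<Rightarrow> real^'n) \<Rightarrow> real^'n \<Rightarrow> (real \<Rightarrow> real^'n) \<Rightarrow> bool" where
  "classical_solution F u0 u \<longleftrightarrow>
     (\<exists>u'. (\<forall>t\<ge>0. (u has_vector_derivative u' t) (at t within {0..})) \<and>
           continuous_on {0..} u' \<and>
           (\<forall>t\<ge>0. u' t = F (u t))) \<and>
     u 0 = u0"

end

theory Submission
  imports Defs
begin

lemma vd_comp:
  assumes "(f has_vector_derivative d) F"
  shows "((\<lambda>x. f x $ i) has_real_derivative d $ i) F"
  using bounded_linear.has_vector_derivative[OF bounded_linear_vec_nth assms, of i]
  by (simp add: has_real_derivative_iff_has_vector_derivative)

lemma vd_from_comp:
  fixes f :: "real \<Rightarrow> real^'n"
  assumes "\<And>i. ((\<lambda>x. f x $ i) has_real_derivative d $ i) (at x within S)"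
  shows "(f has_vector_derivative d) (at x within S)"
proof -
  have "\<forall>b\<in>Basis. ((\<lambda>x. f x \<bullet> b) has_derivative (\<lambda>h. (h *\<^sub>R d) \<bullet> b)) (at x within S)"
  proof
    fix b :: "real^'n" assume "b \<in> Basis"
    then obtain i where b: "b = axis i 1" by (auto simp: Basis_vec_def)
    have "((\<lambda>x. f x $ i) has_derivative (\<lambda>h. h * d $ i)) (at x within S)"
    proof -
      have e: "(\<lambda>h. h * d $ i) = (*) (d $ i)" by (auto simp: mult.commute)
      show ?thesis using assms[of i] by (simp add: has_field_derivative_def e)
    qed
    then show "((\<lambda>x. f x \<bullet> b) has_derivative (\<lambda>h. (h *\<^sub>R d) \<bullet> b)) (at x within S)"
      by (simp add: b cart_eq_inner_axis[symmetric])
  qed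
  then show ?thesis
    unfolding has_vector_derivative_def
    by (subst has_derivative_componentwise_within) simp
qed

lemma linear_lmul: "linear (\<lambda>B::real^'n^'n. A ** B)"
  by (rule linearI) (simp_all add: matrix_add_ldistrib matrix_scalar_ac scalar_matrix_assoc)

lemma linear_app: "linear (\<lambda>B::real^'n^'m. B *v x)"
  by (rule linearI) (simp_all add: matrix_vector_mult_add_rdistrib scaleR_matrix_vector_assoc)

lemma bl_app: "bounded_linear (\<lambda>B::real^'n^'m. B *v x)"
  using linear_app linear_conv_bounded_linear by blast

lemma mv_bound: "\<exists>C>0. \<forall>x. norm ((A::real^'n^'m) *v x) \<le> C * norm x"
  using bounded_linear.pos_bounded[OF matrix_vector_mul_bounded_linear[of A]]
  by (auto simp: mult.commute)

lemma mm_bound: "\<exists>C>0. \<forall>B::real^'n^'n. norm ((A::real^'n^'n) ** B) \<le> C * norm B"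
  using bounded_linear.pos_bounded[OF linear_lmul[unfolded linear_conv_bounded_linear], of A]
  by (auto simp: mult.commute)

lemma mpow_scale: "mpow (c *\<^sub>R A) k = c ^ k *\<^sub>R mpow A k"
  by (induction k) (simp_all add: matrix_scalar_ac scalar_matrix_assoc[symmetric])

lemma mpow_norm:
  fixes A :: "real^'n^'n"
  assumes "\<forall>B::real^'n^'n. norm (A ** B) \<le> C * norm B" "C \<ge> 0"
  shows "norm (mpow A k) \<le> C ^ k * norm (mat 1 :: real^'n^'n)"
proof (induction k)
  case (Suc k)
  have "norm (mpow A (Suc k)) \<le> C * norm (mpow A k)" using assms(1) by simp
  also have "\<dots> \<le> C * (C ^ k * norm (mat 1 :: real^'n^'n))"
    using Suc assms by (simp add: mult_left_mono)
  finally show ?case by simp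
qed simp

lemma mpow_app_norm:
  assumes "\<forall>y. norm (A *v y) \<le> C * norm y" "C \<ge> 0"
  shows "norm (mpow A k *v x) \<le> C ^ k * norm x"
proof (induction k)
  case (Suc k)
  have "norm (mpow A (Suc k) *v x) = norm (A *v (mpow A k *v x))"
    by (simp add: matrix_vector_mul_assoc)
  also have "\<dots> \<le> C * norm (mpow A k *v x)" using assms by simp
  also have "\<dots> \<le> C * (C ^ k * norm x)"
    using Suc assms by (simp add: mult_left_mono)
  finally show ?case by simp
qed simp

lemma summable_mexp: "summable (\<lambda>k. (1 / fact k) *\<^sub>R mpow (A::real^'n^'n) k)"
proof -
  obtain C where C: "C > 0" "\<forall>B::real^'n^'n. norm (A ** B) \<le> C * norm B" using mm_bound by blast
  show ?thesis
  proof (rule summable_comparison_test')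
    show "summable (\<lambda>k. C ^ k / fact k * norm (mat 1 :: real^'n^'n))"
      using summable_exp_generic[of C] by (intro summable_mult2) (simp add: inverse_eq_divide mult.commute)
    fix k :: nat
    have "norm ((1 / fact k) *\<^sub>R mpow A k) = norm (mpow A k) / fact k" by simp
    also have "\<dots> \<le> C ^ k * norm (mat 1 :: real^'n^'n) / fact k"
      using mpow_norm[OF C(2)] C(1) by (intro divide_right_mono) auto
    finally show "norm ((1 / fact k) *\<^sub>R mpow A k) \<le> C ^ k / fact k * norm (mat 1 :: real^'n^'n)" by simp
  qed
qed

lemma mexp_app_sums: "(\<lambda>k. (1 / fact k) *\<^sub>R (mpow A k *v x)) sums (mexp A *v x)"
proof -
  have "(\<lambda>k. (1 / fact k) *\<^sub>R mpow A k) sums mexp A"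
    unfolding mexp_def using summable_mexp by (rule summable_sums)
  from bounded_linear.sums[OF bl_app this, of x] show ?thesis
    by (simp add: scaleR_matrix_vector_assoc)
qed

lemma mexp_scale_sums:
  "(\<lambda>k. (s ^ k / fact k) *\<^sub>R (mpow q k *v x)) sums (mexp (s *\<^sub>R q) *v x)"
  using mexp_app_sums[of "s *\<^sub>R q" x]
  by (simp add: mpow_scale scaleR_matrix_vector_assoc[symmetric])

lemma sums_comp:
  assumes "(\<lambda>k. g k) sums (v::real^'n)"
  shows "(\<lambda>k. g k $ i) sums (v $ i)"
  using bounded_linear.sums[OF bounded_linear_vec_nth assms] .

lemma mexp_deriv_at:
  fixes q :: "real^'n^'n"
  shows "((\<lambda>s. mexp (s *\<^sub>R q) *v x) has_vector_derivative (q *v (mexp (s *\<^sub>R q) *v x))) (at s)"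
proof (rule vd_from_comp)
  fix i
  obtain C where C: "C > 0" "\<forall>y. norm (q *v y) \<le> C * norm y" using mv_bound by blast
  define a where "a k = mpow q k *v x" for k
  define c where "c k = a k $ i / fact k" for k
  have aS: "a (Suc k) = q *v a k" for k by (simp add: a_def matrix_vector_mul_assoc)
  have an: "norm (a k) \<le> C ^ k * norm x" for k
    unfolding a_def using mpow_app_norm[OF C(2)] C(1) by simp
  have val: "(mexp (t *\<^sub>R q) *v x) $ i = (\<Sum>k. c k * t ^ k)" for t
  proof -
    have "(\<lambda>k. ((t ^ k / fact k) *\<^sub>R a k) $ i) sums ((mexp (t *\<^sub>R q) *v x) $ i)"
      using sums_comp[OF mexp_scale_sums] by (simp add: a_def)
    then show ?thesis by (simp add: c_def sums_iff mult.commute)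
  qed
  have summ: "summable (\<lambda>k. c k * y ^ k)" for y
  proof (rule summable_comparison_test')
    show "summable (\<lambda>k. (C * \<bar>y\<bar>) ^ k / fact k * norm x)"
      using summable_exp_generic[of "C * \<bar>y\<bar>"] by (intro summable_mult2) (simp add: inverse_eq_divide mult.commute)
    fix k
    have "norm (c k * y ^ k) = \<bar>a k $ i\<bar> * \<bar>y\<bar> ^ k / fact k"
      by (simp add: c_def abs_mult power_abs)
    also have "\<dots> \<le> C ^ k * norm x * \<bar>y\<bar> ^ k / fact k"
      using order.trans[OF component_le_norm_cart an]
      by (intro divide_right_mono mult_right_mono) auto
    finally show "norm (c k * y ^ k) \<le> (C * \<bar>y\<bar>) ^ k / fact k * norm x"
      by (simp add: power_mult_distrib mult_ac)
  qed
  have der: "((\<lambda>t. \<Sum>k. c k * t ^ k) has_field_derivative (\<Sum>k. diffs c k * s ^ k)) (at s)"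
    by (rule termdiffs_strong_converges_everywhere[OF summ])
  have dc: "diffs c k = a (Suc k) $ i / fact k" for k
  proof -
    have "diffs c k = of_nat (Suc k) * (a (Suc k) $ i / (of_nat (Suc k) * fact k))"
      by (simp add: diffs_def c_def fact_Suc del: of_nat_Suc)
    also have "\<dots> = a (Suc k) $ i / fact k"
      by (simp del: of_nat_Suc)
    finally show ?thesis .
  qed
  have "(\<lambda>k. (s ^ k / fact k) *\<^sub>R (q *v a k)) sums (q *v (mexp (s *\<^sub>R q) *v x))"
    using bounded_linear.sums[OF matrix_vector_mul_bounded_linear mexp_scale_sums, of q s q x]
    by (simp add: a_def matrix_vector_mult_scaleR)
  from sums_comp[OF this, of i]
  have "(\<Sum>k. diffs c k * s ^ k) = (q *v (mexp (s *\<^sub>R q) *v x)) $ i"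
    by (simp add: sums_iff dc aS mult.commute)
  with der show "((\<lambda>t. (mexp (t *\<^sub>R q) *v x) $ i) has_real_derivative (q *v (mexp (s *\<^sub>R q) *v x)) $ i) (at s)"
    by (simp add: val)
qed

lemma at_Icc_Ici: "0 \<le> s \<Longrightarrow> s < b \<Longrightarrow> at s within {0..b} = at s within {0::real..}"
  by (rule at_within_nhd[of s "{..<b}"]) auto

lemma mexp_zero: "mexp (0 *\<^sub>R q) *v x = x"
proof -
  have "(\<lambda>k. ((0::real) ^ k / fact k) *\<^sub>R (mpow q k *v x)) = (\<lambda>k. if k = 0 then mpow q k *v x else 0)"
    by auto
  then have "(\<lambda>k. ((0::real) ^ k / fact k) *\<^sub>R (mpow q k *v x)) sums (mpow q 0 *v x)"
    using sums_single[of 0 "\<lambda>k. mpow q k *v x"] by simp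
  with mexp_scale_sums[of 0 q x] have "mexp (0 *\<^sub>R q) *v x = mpow q 0 *v x"
    by (rule sums_unique2)
  then show ?thesis by simp
qed

lemma mexp_deriv: "((\<lambda>s. mexp (s *\<^sub>R q) *v x) has_vector_derivative (q *v (mexp (s *\<^sub>R q) *v x))) (at s within S)"
  using mexp_deriv_at has_vector_derivative_at_within by blast

lemma mexp_cont: "continuous_on S (\<lambda>s. mexp (s *\<^sub>R q) *v x)"
  by (intro continuous_at_imp_continuous_on ballI has_vector_derivative_continuous[OF mexp_deriv_at])

lemma int_eq:
  assumes "0 \<le> s"
  shows "mexp (s *\<^sub>R q) *v f = q *v integral {0..s} (\<lambda>r. mexp (r *\<^sub>R q) *v f) + f"
proof -
  have "((\<lambda>r. q *v (mexp (r *\<^sub>R q) *v f)) has_integral (mexp (s *\<^sub>R q) *v f - mexp (0 *\<^sub>R q) *v f)) {0..s}"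
    using assms by (intro fundamental_theorem_of_calculus mexp_deriv) auto
  moreover have "((\<lambda>r. mexp (r *\<^sub>R q) *v f) has_integral integral {0..s} (\<lambda>r. mexp (r *\<^sub>R q) *v f)) {0..s}"
    by (intro integrable_integral integrable_continuous_interval mexp_cont)
  from has_integral_linear[OF this matrix_vector_mul_bounded_linear, of q]
  have "((\<lambda>r. q *v (mexp (r *\<^sub>R q) *v f)) has_integral q *v integral {0..s} (\<lambda>r. mexp (r *\<^sub>R q) *v f)) {0..s}"
    by (simp add: o_def)
  ultimately have "mexp (s *\<^sub>R q) *v f - mexp (0 *\<^sub>R q) *v f = q *v integral {0..s} (\<lambda>r. mexp (r *\<^sub>R q) *v f)"
    by (rule has_integral_unique)
  then show ?thesis using mexp_zero[of q f] by (simp add: algebra_simps)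
qed

lemma Sq_deriv:
  assumes "0 \<le> s"
  shows "((\<lambda>s. Sq q f s w) has_vector_derivative (q *v Sq q f s w + f)) (at s within {0..})"
proof -
  have "((\<lambda>u. integral {0..u} (\<lambda>r. mexp (r *\<^sub>R q) *v f)) has_vector_derivative (mexp (s *\<^sub>R q) *v f)) (at s within {0..s+1})"
    using assms by (intro integral_has_vector_derivative mexp_cont) auto
  then have "((\<lambda>u. integral {0..u} (\<lambda>r. mexp (r *\<^sub>R q) *v f)) has_vector_derivative (mexp (s *\<^sub>R q) *v f)) (at s within {0..})"
    using at_Icc_Ici[OF assms, of "s+1"] by simp
  from has_vector_derivative_add[OF mexp_deriv[of q w s "{0..}"] this]
  show ?thesis
    unfolding Sq_def int_eq[OF assms, of q f]
    by (simp add: matrix_vector_right_distrib algebra_simps)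
qed

lemma Sq_zero: "Sq q f 0 w = w"
  using mexp_zero[of q w] by (simp add: Sq_def)

lemma negsq_deriv: "((\<lambda>x::real. (min x 0)^2) has_real_derivative (2 * min x 0)) (at x)"
proof (cases "x < 0")
  case True
  have m: "min x 0 = x" using True by simp
  have d: "((\<lambda>x::real. x^2) has_real_derivative (2 * x)) (at x)"
    using DERIV_pow[of 2 x UNIV] by simp
  show ?thesis unfolding m
    by (rule has_field_derivative_transform_within_open[OF d, of "{..<0}"]) (use True in auto)
next
  case False
  show ?thesis
  proof (cases "x > 0")
    case True
    have m: "min x 0 = 0" using True by simp
    have d: "((\<lambda>x::real. 0) has_real_derivative 2 * 0) (at x)" by simp
    show ?thesis unfolding m
      by (rule has_field_derivative_transform_within_open[OF d, of "{0<..}"]) (use True in auto)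
  next
    case False
    with \<open>\<not> x < 0\<close> have x: "x = 0" by simp
    have "((\<lambda>y. ((min y 0)^2 - (min x 0)^2) / (y - x)) \<longlongrightarrow> 0) (at x)"
    proof (rule Lim_null_comparison)
      show "\<forall>\<^sub>F y in at x. norm (((min y 0)^2 - (min x 0)^2) / (y - x)) \<le> \<bar>y\<bar>"
      proof (rule always_eventually, rule allI)
        fix y :: real
        show "norm (((min y 0)^2 - (min x 0)^2) / (y - x)) \<le> \<bar>y\<bar>"
        proof (cases "y < 0")
          case True
          then have "((min y 0)^2 - (min x 0)^2) / (y - x) = y" using x by (simp add: power2_eq_square)
          then show ?thesis by simp
        next
          case False
          then have "min y 0 = 0" by simp
          then show ?thesis using x by simp
        qed
      qed
      have "((\<lambda>y::real. y) \<longlongrightarrow> 0) (at 0)" by (rule tendsto_ident_at)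
      then show "((\<lambda>y. \<bar>y\<bar>) \<longlongrightarrow> 0) (at x)"
        unfolding x by (rule tendsto_rabs_zero)
    qed
    then show ?thesis using x by (simp add: has_field_derivative_iff)
  qed
qed

lemma Icc_deriv_le_0:
  fixes psi :: "real \<Rightarrow> real"
  assumes "\<forall>s\<in>{0..T}. (psi has_real_derivative d s) (at s within {0..T})"
    and "\<forall>s\<in>{0..T}. d s \<le> 0" and "s \<in> {0..T}"
  shows "psi s \<le> psi 0"
proof -
  have "\<exists>x\<in>{0..s}. psi s - psi 0 = (\<lambda>h. h * d x) (s - 0)"
  proof (rule mvt_very_simple)
    show "0 \<le> s" using assms by auto
    fix x assume "0 \<le> x" "x \<le> s"
    with assms have "(psi has_real_derivative d x) (at x within {0..T})" by auto
    then have "(psi has_real_derivative d x) (at x within {0..s})"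
      by (rule DERIV_subset) (use assms in auto)
    moreover have "(\<lambda>h. h * d x) = (*) (d x)" by (auto simp: mult.commute)
    ultimately show "(psi has_derivative (\<lambda>h. h * d x)) (at x within {0..s})"
      by (simp add: has_field_derivative_def)
  qed
  then obtain x where "x \<in> {0..s}" "psi s - psi 0 = s * d x" by auto
  moreover have "d x \<le> 0" using assms \<open>x \<in> {0..s}\<close> by auto
  moreover have "0 \<le> s" using assms by simp
  ultimately show ?thesis using mult_nonneg_nonpos[of s "d x"] by linarith
qed

lemma neg_lemma:
  fixes w :: "real \<Rightarrow> real^'n"
  assumes der: "\<forall>s\<in>{0..T}. (w has_vector_derivative w' s) (at s within {0..T})"
    and w0: "\<forall>i. w 0 $ i \<ge> 0"
    and key: "\<forall>s\<in>{0..T}. (\<Sum>i\<in>UNIV. min (w s $ i) 0 * w' s $ i) \<le> K * (\<Sum>i\<in>UNIV. (min (w s $ i) 0)^2)"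
    and s: "s \<in> {0..T}"
  shows "w s $ i \<ge> 0"
proof -
  define phi where "phi s = (\<Sum>i\<in>UNIV. (min (w s $ i) 0)^2)" for s
  define psi where "psi s = exp (- (2*K) * s) * phi s" for s
  have dphi: "(phi has_real_derivative (\<Sum>i\<in>UNIV. 2 * min (w s $ i) 0 * w' s $ i)) (at s within {0..T})"
    if "s \<in> {0..T}" for s
    unfolding phi_def
    by (intro DERIV_sum DERIV_chain2[OF negsq_deriv] vd_comp) (use der that in auto)
  define D where "D s = (- (2*K)) * exp (- (2*K) * s) * phi s + (\<Sum>i\<in>UNIV. 2 * min (w s $ i) 0 * w' s $ i) * exp (- (2*K) * s)" for s
  have dpsi: "(psi has_real_derivative D s) (at s within {0..T})" if "s \<in> {0..T}" for s
  proof -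
    have e: "((\<lambda>s. exp (- (2*K) * s)) has_real_derivative (- (2*K)) * exp (- (2*K) * s)) (at s within {0..T})"
      by (auto intro!: derivative_eq_intros)
    show ?thesis unfolding psi_def D_def
      by (rule DERIV_mult[OF e dphi[OF that]])
  qed
  have dle: "D s \<le> 0" if "s \<in> {0..T}" for s
  proof -
    have "(\<Sum>i\<in>UNIV. 2 * min (w s $ i) 0 * w' s $ i) = 2 * (\<Sum>i\<in>UNIV. min (w s $ i) 0 * w' s $ i)"
      by (simp add: sum_distrib_left mult.assoc)
    also have "\<dots> \<le> 2 * K * phi s" using key that by (simp add: phi_def)
    finally have "(\<Sum>i\<in>UNIV. 2 * min (w s $ i) 0 * w' s $ i) * exp (- (2*K) * s) \<le> (2 * K * phi s) * exp (- (2*K) * s)"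
      by (intro mult_right_mono) auto
    then show ?thesis by (simp add: D_def algebra_simps)
  qed
  have "psi s \<le> psi 0"
    using Icc_deriv_le_0[of T psi D s] dpsi dle s by blast
  moreover have "phi 0 = 0" using w0 by (simp add: phi_def min_absorb2)
  ultimately have "phi s \<le> 0" by (simp add: psi_def mult_le_0_iff)
  moreover have "(min (w s $ i) 0)^2 \<le> phi s"
    unfolding phi_def by (rule member_le_sum) auto
  ultimately have "(min (w s $ i) 0)^2 \<le> 0" by linarith
  then show ?thesis by (simp add: min_def split: if_splits)
qed

lemma absprod_le: "\<bar>a::real\<bar> * \<bar>b\<bar> \<le> max (a^2) (b^2)"
proof (cases "\<bar>a\<bar> \<le> \<bar>b\<bar>")
  case True
  then have "\<bar>a\<bar> * \<bar>b\<bar> \<le> \<bar>b\<bar> * \<bar>b\<bar>" by (intro mult_right_mono) auto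
  then show ?thesis by (simp add: power2_eq_square max_def abs_mult[symmetric])
next
  case False
  then have "\<bar>a\<bar> * \<bar>b\<bar> \<le> \<bar>a\<bar> * \<bar>a\<bar>" by (intro mult_left_mono) auto
  then show ?thesis by (simp add: power2_eq_square max_def abs_mult[symmetric])
qed

lemma key_alg:
  fixes x d :: "real^'n" and q :: "real^'n^'n"
  assumes off: "\<forall>i j. i \<noteq> j \<longrightarrow> q $ i $ j \<ge> 0"
    and ge: "\<forall>i. d $ i \<ge> (q *v x) $ i"
  shows "(\<Sum>i\<in>UNIV. min (x $ i) 0 * d $ i) \<le> (\<Sum>i\<in>UNIV. \<Sum>j\<in>UNIV. \<bar>q $ i $ j\<bar>) * (\<Sum>i\<in>UNIV. (min (x $ i) 0)^2)"
proof -
  define n where "n i = min (x $ i) 0" for i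
  define Phi where "Phi = (\<Sum>i\<in>UNIV. (n i)^2)"
  have nsq: "(n i)^2 \<le> Phi" for i unfolding Phi_def by (rule member_le_sum) auto
  have step1: "n i * d $ i \<le> n i * (q *v x) $ i" for i
    using ge by (intro mult_left_mono_neg) (auto simp: n_def)
  have step2: "n i * (q $ i $ j * x $ j) \<le> \<bar>q $ i $ j\<bar> * Phi" for i j
  proof -
    have a: "n i * (q $ i $ j * x $ j) \<le> q $ i $ j * (n i * n j)"
    proof (cases "i = j")
      case True
      have e: "n i * x $ i = n i * n i" by (simp add: n_def min_def)
      have "n i * (q $ i $ j * x $ j) = q $ i $ j * (n i * x $ i)" using True by (simp add: algebra_simps)
      also have "\<dots> = q $ i $ j * (n i * n j)" using True e by (simp only:)
      finally show ?thesis by (rule eq_refl)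
    next
      case False
      then have "q $ i $ j \<ge> 0" using off by auto
      moreover have "n i \<le> 0" "x $ j \<ge> n j" by (auto simp: n_def)
      ultimately have "(n i * q $ i $ j) * x $ j \<le> (n i * q $ i $ j) * n j"
        by (intro mult_left_mono_neg) (auto simp: mult_nonpos_nonneg)
      then show ?thesis by (simp add: algebra_simps)
    qed
    have "q $ i $ j * (n i * n j) \<le> \<bar>q $ i $ j\<bar> * (\<bar>n i\<bar> * \<bar>n j\<bar>)"
      by (metis abs_ge_self abs_mult)
    also have "\<dots> \<le> \<bar>q $ i $ j\<bar> * Phi"
      using absprod_le[of "n i" "n j"] nsq[of i] nsq[of j] by (intro mult_left_mono) auto
    finally show ?thesis using a by linarith
  qed
  have "(\<Sum>i\<in>UNIV. n i * d $ i) \<le> (\<Sum>i\<in>UNIV. n i * (q *v x) $ i)"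
    by (intro sum_mono step1)
  also have "\<dots> = (\<Sum>i\<in>UNIV. \<Sum>j\<in>UNIV. n i * (q $ i $ j * x $ j))"
    by (simp add: matrix_vector_mult_def sum_distrib_left)
  also have "\<dots> \<le> (\<Sum>i\<in>UNIV. \<Sum>j\<in>UNIV. \<bar>q $ i $ j\<bar> * Phi)"
    by (intro sum_mono step2)
  also have "\<dots> = (\<Sum>i\<in>UNIV. \<Sum>j\<in>UNIV. \<bar>q $ i $ j\<bar>) * Phi"
    by (simp add: sum_distrib_right)
  finally show ?thesis by (simp add: n_def Phi_def)
qed

lemma pos_lemma:
  fixes w :: "real \<Rightarrow> real^'n" and q :: "real^'n^'n"
  assumes off: "\<forall>i j. i \<noteq> j \<longrightarrow> q $ i $ j \<ge> 0"
    and der: "\<forall>s\<in>{0..T}. (w has_vector_derivative w' s) (at s within {0..T})"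
    and w0: "\<forall>i. w 0 $ i \<ge> 0"
    and ge: "\<forall>s\<in>{0..T}. \<forall>i. w' s $ i \<ge> (q *v w s) $ i"
    and s: "s \<in> {0..T}"
  shows "w s $ i \<ge> 0"
  by (rule neg_lemma[OF der w0 _ s]) (use key_alg[OF off] ge in blast)

lemma Q_off: "is_Q_matrix q \<Longrightarrow> \<forall>i j. i \<noteq> j \<longrightarrow> q $ i $ j \<ge> 0"
  by (simp add: is_Q_matrix_def)

lemma Q_one: "is_Q_matrix q \<Longrightarrow> q *v vec c = 0"
  by (simp add: is_Q_matrix_def matrix_vector_mult_def vec_eq_iff sum_distrib_right[symmetric])

lemma mexp_nonneg:
  assumes Q: "is_Q_matrix q" and s: "0 \<le> s" and x: "\<forall>j. x $ j \<ge> 0"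
  shows "(mexp (s *\<^sub>R q) *v x) $ i \<ge> 0"
proof (rule pos_lemma[OF Q_off[OF Q], of s "\<lambda>s. mexp (s *\<^sub>R q) *v x" "\<lambda>s. q *v (mexp (s *\<^sub>R q) *v x)"])
  show "\<forall>t\<in>{0..s}. ((\<lambda>s. mexp (s *\<^sub>R q) *v x) has_vector_derivative q *v (mexp (t *\<^sub>R q) *v x)) (at t within {0..s})"
    using mexp_deriv by blast
  show "\<forall>i. 0 \<le> (mexp (0 *\<^sub>R q) *v x) $ i" using x mexp_zero[of q x] by simp
qed (use s in auto)

lemma mexp_const:
  assumes Q: "is_Q_matrix q"
  shows "mexp (s *\<^sub>R q) *v vec c = vec c"
proof -
  have z: "mpow q (Suc k) *v vec c = 0" for k
  proof (induction k)
    case 0 then show ?case using Q_one[OF Q] by (simp add: matrix_vector_mul_assoc[symmetric])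
  next
    case (Suc k)
    have "mpow q (Suc (Suc k)) *v vec c = q *v (mpow q (Suc k) *v vec c)"
      by (simp add: matrix_vector_mul_assoc)
    then show ?case using Suc by simp
  qed
  have "(\<lambda>k. (s ^ k / fact k) *\<^sub>R (mpow q k *v vec c)) = (\<lambda>k. if k = 0 then vec c else 0)"
  proof
    fix k show "(s ^ k / fact k) *\<^sub>R (mpow q k *v vec c) = (if k = 0 then vec c else 0)"
      using z by (cases k) auto
  qed
  then have "(\<lambda>k. (s ^ k / fact k) *\<^sub>R (mpow q k *v vec c)) sums vec c"
    using sums_single[of 0 "\<lambda>k. vec c"] by simp
  with mexp_scale_sums[of s q "vec c"] show ?thesis by (rule sums_unique2)
qed

lemma mexp_mono:
  assumes Q: "is_Q_matrix q" and s: "0 \<le> s" and xy: "x \<le> y"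
  shows "mexp (s *\<^sub>R q) *v x \<le> mexp (s *\<^sub>R q) *v y"
proof -
  have "\<forall>j. (y - x) $ j \<ge> 0" using xy by (simp add: less_eq_vec_def)
  then have "\<forall>i. (mexp (s *\<^sub>R q) *v (y - x)) $ i \<ge> 0" using mexp_nonneg[OF Q s] by blast
  then show ?thesis by (simp add: less_eq_vec_def matrix_vector_mult_diff_distrib)
qed

lemma mexp_le_const:
  assumes Q: "is_Q_matrix q" and s: "0 \<le> s" and x: "x \<le> vec c"
  shows "mexp (s *\<^sub>R q) *v x \<le> vec c"
  using mexp_mono[OF Q s x] mexp_const[OF Q] by simp

lemma int_term_nonpos:
  assumes Q: "is_Q_matrix q" and f: "f \<le> 0"
  shows "integral {0..s} (\<lambda>r. mexp (r *\<^sub>R q) *v f) \<le> 0"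
proof -
  have int: "(\<lambda>r. mexp (r *\<^sub>R q) *v f) integrable_on {0..s}"
    by (intro integrable_continuous_interval mexp_cont)
  have "integral {0..s} (\<lambda>r. mexp (r *\<^sub>R q) *v f) $ i \<le> 0" for i
  proof -
    have "(mexp (r *\<^sub>R q) *v f) $ i \<le> 0" if "r \<in> {0..s}" for r
      using mexp_le_const[OF Q _ , of r f 0] that f by (auto simp: less_eq_vec_def)
    have ic: "(\<lambda>r. (mexp (r *\<^sub>R q) *v f) $ i) integrable_on {0..s}"
      using integrable_linear[OF int bounded_linear_vec_nth, of i] by (simp add: o_def)
    have "0 \<le> integral {0..s} (\<lambda>r. - (mexp (r *\<^sub>R q) *v f) $ i)"
      using ic \<open>\<And>r. r \<in> {0..s} \<Longrightarrow> (mexp (r *\<^sub>R q) *v f) $ i \<le> 0\<close>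
      by (intro integral_nonneg integrable_neg) auto
    then show ?thesis using integral_component_eq_cart[OF int, of i]
      by (simp add: integral_neg)
  qed
  then show ?thesis by (simp add: less_eq_vec_def)
qed

lemma Sq_le_const:
  assumes Q: "is_Q_matrix q" and f: "f \<le> 0" and s: "0 \<le> s" and w: "w \<le> vec c"
  shows "Sq q f s w \<le> vec c"
  using mexp_le_const[OF Q s w] int_term_nonpos[OF Q f, of s] unfolding Sq_def
  by (metis add_mono add.right_neutral)

lemma Sq_mono:
  assumes Q: "is_Q_matrix q" and s: "0 \<le> s" and w: "w \<le> w'"
  shows "Sq q f s w \<le> Sq q f s w'"
  using mexp_mono[OF Q s w] unfolding Sq_def by (rule add_right_mono)

lemma Sq_shift:
  assumes Q: "is_Q_matrix q"
  shows "Sq q f s (w + vec c) = Sq q f s w + vec c"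
  using mexp_const[OF Q, of s c] unfolding Sq_def
  by (simp add: matrix_vector_right_distrib algebra_simps)

lemma vsup_le:
  assumes "A \<noteq> {}" "\<And>a. a \<in> A \<Longrightarrow> g a \<le> v"
  shows "vsup A g \<le> v"
  unfolding vsup_def less_eq_vec_def
  using assms by (auto intro!: cSUP_least simp: less_eq_vec_def)

lemma vsup_ge:
  assumes "\<And>i. bdd_above ((\<lambda>a. g a $ i) ` A)" "a \<in> A"
  shows "g a \<le> vsup A g"
  unfolding vsup_def less_eq_vec_def
  using assms by (auto intro!: cSUP_upper)

lemma vsup_mono:
  assumes "A \<noteq> {}" "\<And>i. bdd_above ((\<lambda>a. g' a $ i) ` A)" "\<And>a. a \<in> A \<Longrightarrow> g a \<le> g' a"
  shows "vsup A g \<le> vsup A g'"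
  by (rule vsup_le[OF assms(1)]) (meson assms(2,3) order_trans vsup_ge)

lemma vsup_const: "A \<noteq> {} \<Longrightarrow> vsup A (\<lambda>a. v) = v"
  by (simp add: vsup_def vec_eq_iff)

lemma vec_norm_bound: "(u::real^'n) \<le> vec (norm u)"
  by (simp add: less_eq_vec_def) (meson abs_ge_self component_le_norm_cart order_trans)

lemma bdd_vec: "(\<And>a. a \<in> A \<Longrightarrow> g a \<le> vec c) \<Longrightarrow> bdd_above ((\<lambda>a. g a $ i) ` A)"
  by (rule bdd_aboveI2[of _ _ c]) (auto simp: less_eq_vec_def)

lemma map2_cons2: "map2 (-) (tl (a # b # xs)) (a # b # xs) = (b - a) # map2 (-) (tl (b # xs)) (b # xs)"
  by simp

lemma diffs_nonneg: "sorted (ts::real list) \<Longrightarrow> h \<in> set (map2 (-) (tl ts) ts) \<Longrightarrow> h \<ge> 0"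
proof (induction ts rule: induct_list012)
  case (3 x y zs)
  then show ?case by (auto simp only: map2_cons2 list.set sorted2)
qed auto

lemma diffs_sum: "ts \<noteq> [] \<Longrightarrow> sum_list (map2 (-) (tl ts) ts) = last ts - hd (ts::real list)"
proof (induction ts rule: induct_list012)
  case (3 x y zs)
  then show ?case by (simp only: map2_cons2) simp
qed auto

lemma last_sorted_Max: "sorted (xs::real list) \<Longrightarrow> xs \<noteq> [] \<Longrightarrow> last xs = Max (set xs)"
proof -
  assume s: "sorted xs" and ne: "xs \<noteq> []"
  have xs: "xs = butlast xs @ [last xs]" using ne by simp
  have b: "\<forall>y\<in>set (butlast xs). y \<le> last xs"
    using s xs sorted_append[of "butlast xs" "[last xs]"] by simp
  have "y \<le> last xs" if "y \<in> set xs" for y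
  proof -
    have "y \<in> set (butlast xs) \<or> y = last xs"
      using that xs by (metis rotate1.simps(2) set_ConsD set_rotate1)
    then show ?thesis using b by auto
  qed
  moreover have "last xs \<in> set xs" using ne by simp
  ultimately show ?thesis by (intro Max_eqI[symmetric]) auto
qed

lemma shift_deriv:
  assumes der: "\<forall>t\<ge>0. (v has_vector_derivative v' t) (at t within {0..})"
    and r: "0 \<le> r" and s: "0 \<le> s"
  shows "((\<lambda>s. v (r + s)) has_vector_derivative v' (r + s)) (at s within {0..})"
proof -
  have 1: "((\<lambda>s. r + s) has_vector_derivative 1) (at s within {0..})"
    by (auto intro!: derivative_eq_intros)
  have 2: "(v has_vector_derivative v' (r + s)) (at ((\<lambda>s. r + s) s) within (\<lambda>s. r + s) ` {0..})"
    by (rule has_vector_derivative_within_subset[of _ _ _ "{0..}"]) (use der r s in auto)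
  from vector_diff_chain_within[OF 1 2] show ?thesis by (simp add: o_def)
qed

section \<open>Convex functions are locally Lipschitz\<close>

lemma aux_lin: "(a::real) \<le> (1 - b) * c + b * e \<Longrightarrow> a - c \<le> b * (e - c)"
  by (simp add: algebra_simps)

lemma conv_lip_one:
  fixes g :: "real^'n \<Rightarrow> real"
  assumes cv: "convex_on UNIV g" and M: "\<forall>z. norm z \<le> R + 1 \<longrightarrow> \<bar>g z\<bar> \<le> M"
    and x: "norm x \<le> R" and y: "norm y \<le> R"
  shows "g y - g x \<le> 2 * M * norm (y - x)"
proof (cases "x = y")
  case True then show ?thesis using M x by (auto intro: mult_nonneg_nonneg)
next
  case False
  define d where "d = norm (y - x)"
  have d: "d > 0" using False by (simp add: d_def)
  define z where "z = y + (1/d) *\<^sub>R (y - x)"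
  have "norm z \<le> norm y + norm ((1/d) *\<^sub>R (y - x))" unfolding z_def by (rule norm_triangle_ineq)
  also have "norm ((1/d) *\<^sub>R (y - x)) = 1" using d by (simp add: d_def)
  finally have nz: "norm z \<le> R + 1" using y by simp
  have yeq: "(1/(1+d)) *\<^sub>R x + (d/(1+d)) *\<^sub>R z = y"
  proof -
    have p: "1 + (d*d + d*2) > 0" using d by (simp add: add_pos_pos)
    show ?thesis using d p by (simp add: vec_eq_iff z_def field_simps)
  qed
  have "g y \<le> (1/(1+d)) * g x + (d/(1+d)) * g z"
  proof -
    have u: "1/(1+d) \<ge> 0" "d/(1+d) \<ge> 0" "1/(1+d) + d/(1+d) = 1" using d by (auto simp: field_simps)
    from cv have "\<forall>x\<in>UNIV. \<forall>y\<in>UNIV. \<forall>u\<ge>0. \<forall>v\<ge>0. u + v = 1 \<longrightarrow> g (u *\<^sub>R x + v *\<^sub>R y) \<le> u * g x + v * g y"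
      unfolding convex_on_def by blast
    then have "g ((1/(1+d)) *\<^sub>R x + (d/(1+d)) *\<^sub>R z) \<le> (1/(1+d)) * g x + (d/(1+d)) * g z"
      using u by blast
    then show ?thesis using yeq by simp
  qed
  moreover have ab: "1/(1+d) = 1 - d/(1+d)" using d by (simp add: field_simps)
  ultimately have "g y \<le> (1 - d/(1+d)) * g x + (d/(1+d)) * g z" by simp
  then have "g y - g x \<le> (d/(1+d)) * (g z - g x)"
    using aux_lin by blast
  also have "\<dots> \<le> (d/(1+d)) * (2*M)"
  proof (rule mult_left_mono)
    have "\<bar>g z\<bar> \<le> M" "\<bar>g x\<bar> \<le> M" using M nz x by auto
    then show "g z - g x \<le> 2 * M" by linarith
    show "0 \<le> d / (1 + d)" using d by simp
  qed
  also have "\<dots> \<le> d * (2*M)"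
  proof (rule mult_right_mono)
    show "d/(1+d) \<le> d" using d by (simp add: field_simps)
    have "\<bar>g x\<bar> \<le> M" using M x by auto
    then show "0 \<le> 2*M" using abs_ge_zero[of "g x"] by linarith
  qed
  finally show ?thesis by (simp add: d_def mult_ac)
qed

lemma conv_lip:
  fixes g :: "real^'n \<Rightarrow> real"
  assumes cv: "convex_on UNIV g" and ct: "continuous_on UNIV g"
  shows "\<exists>L. \<forall>x y. norm x \<le> R \<longrightarrow> norm y \<le> R \<longrightarrow> \<bar>g x - g y\<bar> \<le> L * norm (x - y)"
proof -
  have "compact (g ` cball 0 (R+1))"
    by (intro compact_continuous_image continuous_on_subset[OF ct]) auto
  then obtain M where M: "\<forall>w\<in>g ` cball 0 (R+1). norm w \<le> M"
    using compact_imp_bounded bounded_iff by metis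
  then have M': "\<forall>z. norm z \<le> R + 1 \<longrightarrow> \<bar>g z\<bar> \<le> M" by auto
  show ?thesis
  proof (intro exI allI impI)
    fix x y :: "real^'n" assume x: "norm x \<le> R" and y: "norm y \<le> R"
    show "\<bar>g x - g y\<bar> \<le> 2 * M * norm (x - y)"
      using conv_lip_one[OF cv M' x y] conv_lip_one[OF cv M' y x] by (simp add: abs_le_iff norm_minus_commute)
  qed
qed

section \<open>Picard iteration\<close>

fun pic :: "(real^'n \<Rightarrow> real^'n) \<Rightarrow> real^'n \<Rightarrow> nat \<Rightarrow> real \<Rightarrow> real^'n" where
  "pic F u0 0 t = u0"
| "pic F u0 (Suc n) t = u0 + integral {0..t} (\<lambda>s. F (pic F u0 n s))"

declare pic.simps(2)[simp del]

lemma pic_Suc_eq: "pic F u0 (Suc n) = (\<lambda>t. u0 + integral {0..t} (\<lambda>s. F (pic F u0 n s)))"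
  by (rule ext) (simp add: pic.simps(2))

lemma pic_cont:
  assumes cF: "continuous_on UNIV F"
  shows "continuous_on {0..b} (pic F u0 n)"
proof (induction n)
  case (Suc n)
  have "continuous_on {0..b} (\<lambda>s. F (pic F u0 n s))"
    using Suc by (intro continuous_on_compose2[OF cF]) auto
  then have "continuous_on {0..b} (\<lambda>t. integral {0..t} (\<lambda>s. F (pic F u0 n s)))"
    by (intro indefinite_integral_continuous_1 integrable_continuous_interval)
  then show ?case unfolding pic_Suc_eq by (intro continuous_on_add continuous_on_const)
qed simp

lemma pic_int:
  assumes cF: "continuous_on UNIV F"
  shows "(\<lambda>s. F (pic F u0 n s)) integrable_on {0..b}"
  by (intro integrable_continuous_interval continuous_on_compose2[OF cF pic_cont[OF cF]]) auto

lemma pic_deriv: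
  assumes cF: "continuous_on UNIV F" and t: "t \<in> {0..b}"
  shows "(pic F u0 (Suc n) has_vector_derivative F (pic F u0 n t)) (at t within {0..b})"
proof -
  have "((\<lambda>t. integral {0..t} (\<lambda>s. F (pic F u0 n s))) has_vector_derivative F (pic F u0 n t)) (at t within {0..b})"
    by (intro integral_has_vector_derivative continuous_on_compose2[OF cF pic_cont[OF cF]] t) auto
  then have "((\<lambda>t. u0 + integral {0..t} (\<lambda>s. F (pic F u0 n s))) has_vector_derivative 0 + F (pic F u0 n t)) (at t within {0..b})"
    by (intro has_vector_derivative_add) auto
  then show ?thesis unfolding pic_Suc_eq by simp
qed

lemma pic_zero: "pic F u0 n 0 = u0"
  by (cases n) (auto simp: pic.simps(2))

lemma int_pow:
  assumes "0 \<le> t"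
  shows "((\<lambda>s. c * s ^ n) has_integral c * t ^ Suc n / real (Suc n)) {0..t}"
proof -
  have "((\<lambda>s. c * s ^ n) has_integral (c * t ^ Suc n / real (Suc n) - c * 0 ^ Suc n / real (Suc n))) {0..t}"
  proof (rule fundamental_theorem_of_calculus[OF assms])
    fix x assume "x \<in> {0..t}"
    show "((\<lambda>s. c * s ^ Suc n / real (Suc n)) has_vector_derivative c * x ^ n) (at x within {0..t})"
      unfolding has_real_derivative_iff_has_vector_derivative[symmetric]
      by (rule derivative_eq_intros refl | simp del: of_nat_Suc)+
  qed
  then show ?thesis by simp
qed

lemma pic_bound:
  assumes cF: "continuous_on UNIV F"
    and lip: "\<forall>x y. norm (F x - F y) \<le> L * norm (x - y)" and L: "L \<ge> 0"
    and t: "0 \<le> t"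
  shows "norm (pic F u0 (Suc n) t - pic F u0 n t) \<le> norm (F u0) * L ^ n * t ^ Suc n / fact (Suc n)"
  using t
proof (induction n arbitrary: t)
  case 0
  then show ?case by (simp add: integral_const_real pic.simps(2))
next
  case (Suc n)
  define K where "K = norm (F u0)"
  have "pic F u0 (Suc (Suc n)) t - pic F u0 (Suc n) t =
      integral {0..t} (\<lambda>s. F (pic F u0 (Suc n) s) - F (pic F u0 n s))"
    by (simp add: pic.simps(2)[of F u0 "Suc n" t] pic.simps(2)[of F u0 n t] integral_diff[OF pic_int[OF cF] pic_int[OF cF]])
  also have "norm \<dots> \<le> integral {0..t} (\<lambda>s. (L * (K * L ^ n / fact (Suc n))) * s ^ Suc n)"
  proof (rule integral_norm_bound_integral)
    show "(\<lambda>s. F (pic F u0 (Suc n) s) - F (pic F u0 n s)) integrable_on {0..t}"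
      by (intro integrable_diff pic_int[OF cF])
    show "(\<lambda>s. (L * (K * L ^ n / fact (Suc n))) * s ^ Suc n) integrable_on {0..t}"
      using int_pow[OF Suc.prems] by blast
    fix s assume s: "s \<in> {0..t}"
    have "norm (F (pic F u0 (Suc n) s) - F (pic F u0 n s)) \<le> L * norm (pic F u0 (Suc n) s - pic F u0 n s)"
      using lip by blast
    also have "\<dots> \<le> L * (K * L ^ n * s ^ Suc n / fact (Suc n))"
      using Suc.IH[of s] s L by (intro mult_left_mono) (auto simp: K_def)
    finally show "norm (F (pic F u0 (Suc n) s) - F (pic F u0 n s)) \<le> (L * (K * L ^ n / fact (Suc n))) * s ^ Suc n"
      by (simp add: field_simps)
  qed
  also have "\<dots> = (L * (K * L ^ n / fact (Suc n))) * t ^ Suc (Suc n) / real (Suc (Suc n))"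
    using int_pow[OF Suc.prems] by (rule integral_unique)
  also have "\<dots> = K * L ^ Suc n * t ^ Suc (Suc n) / fact (Suc (Suc n))"
    by (simp add: field_simps del: of_nat_Suc)
  finally show ?case by (simp add: K_def)
qed

lemma lip_cont:
  assumes lip: "\<forall>x y. norm (F x - F y) \<le> L * norm (x - y)" and L: "L \<ge> 0"
  shows "continuous_on UNIV (F :: real^'n \<Rightarrow> real^'n)"
  unfolding continuous_on_iff
proof (intro ballI allI impI)
  fix x :: "real^'n" and e :: real assume e: "0 < e"
  show "\<exists>d>0. \<forall>x'\<in>UNIV. dist x' x < d \<longrightarrow> dist (F x') (F x) < e"
  proof (intro exI[of _ "e / (L + 1)"] conjI ballI impI)
    show "0 < e / (L + 1)" using e L by simp
    fix x' assume "dist x' x < e / (L + 1)"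
    then have "(L + 1) * dist x' x < e" using L by (simp add: field_simps)
    moreover have "dist (F x') (F x) \<le> L * dist x' x" using lip by (simp add: dist_norm)
    moreover have "L * dist x' x \<le> (L + 1) * dist x' x" by (simp add: distrib_right)
    ultimately show "dist (F x') (F x) < e" by linarith
  qed
qed

lemma picard_exists:
  fixes F :: "real^'n \<Rightarrow> real^'n"
  assumes lip: "\<forall>x y. norm (F x - F y) \<le> L * norm (x - y)" and L: "L \<ge> 0"
  shows "\<exists>y. y 0 = u0 \<and> (\<forall>t\<ge>0. (y has_vector_derivative F (y t)) (at t within {0..}))"
proof -
  have cF: "continuous_on UNIV F" by (rule lip_cont[OF lip L])
  define K where "K = norm (F u0)"
  define d where "d k t = pic F u0 (Suc k) t - pic F u0 k t" for k t
  define y where "y t = u0 + (\<Sum>k. d k t)" for t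
  have picsum: "pic F u0 n t = u0 + (\<Sum>k<n. d k t)" for n t
    unfolding d_def using sum_lessThan_telescope[of "\<lambda>k. pic F u0 k t" n] by (simp add: pic_zero)
  have ev: "\<And>e. e > 0 \<Longrightarrow> \<forall>\<^sub>F n in sequentially. \<forall>t\<in>{0..b}. norm (pic F u0 n t - y t) < e"
    and conv: "\<And>t. t \<in> {0..b} \<Longrightarrow> (\<lambda>n. pic F u0 n t) \<longlonglongrightarrow> y t"
    if b: "0 \<le> b" for b
  proof -
    define M where "M k = K * b * (L * b) ^ k / fact k" for k
    have Mb: "norm (d k t) \<le> M k" if "t \<in> {0..b}" for k t
    proof -
      have "norm (d k t) \<le> K * L ^ k * t ^ Suc k / fact (Suc k)"
        unfolding d_def K_def using that by (intro pic_bound[OF cF lip L]) auto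
      also have "\<dots> \<le> K * L ^ k * b ^ Suc k / fact (Suc k)"
        using that L by (intro divide_right_mono mult_left_mono power_mono) (auto simp: K_def)
      also have "\<dots> \<le> K * L ^ k * b ^ Suc k / fact k"
        using that L b by (intro divide_left_mono) (auto simp: K_def fact_mono)
      also have "\<dots> = M k" by (simp add: M_def power_mult_distrib mult_ac)
      finally show ?thesis .
    qed
    have s1: "summable (\<lambda>k. (L*b)^k / fact k)"
      using summable_exp_generic[of "L * b"] by (simp add: divide_inverse mult.commute)
    have "summable (\<lambda>k. (K*b) * ((L*b)^k / fact k))" by (rule summable_mult[OF s1])
    then have sM: "summable M" by (simp add: M_def[abs_def])
    have ul: "uniform_limit {0..b} (\<lambda>n t. \<Sum>k<n. d k t) (\<lambda>t. \<Sum>k. d k t) sequentially"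
      by (rule Weierstrass_m_test[OF Mb sM])
    show "\<forall>\<^sub>F n in sequentially. \<forall>t\<in>{0..b}. norm (pic F u0 n t - y t) < e" if e: "e > 0" for e
      using uniform_limitD[OF ul e] by eventually_elim (simp add: picsum y_def dist_norm)
    fix t assume t: "t \<in> {0..b}"
    have "summable (\<lambda>k. d k t)"
      by (rule summable_comparison_test'[OF sM]) (use Mb t in auto)
    from summable_LIMSEQ[OF this] show "(\<lambda>n. pic F u0 n t) \<longlonglongrightarrow> y t"
      unfolding picsum y_def by (intro tendsto_add tendsto_const)
  qed
  have "(y has_vector_derivative F (y t)) (at t within {0..})" if t: "0 \<le> t" for t
  proof -
    define b where "b = t + 1"
    have b: "0 \<le> b" "t \<in> {0..b}" using t by (auto simp: b_def)
    have "\<exists>g. \<forall>x\<in>{0..b}. (\<lambda>n. pic F u0 (Suc n) x) \<longlonglongrightarrow> g x \<and>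
             (g has_derivative (\<lambda>h. h *\<^sub>R F (y x))) (at x within {0..b})"
    proof (rule has_derivative_sequence[where f' = "\<lambda>n x h. h *\<^sub>R F (pic F u0 n x)"])
      show "convex {0..b}" by simp
      show "\<And>n x. x \<in> {0..b} \<Longrightarrow> (pic F u0 (Suc n) has_derivative (\<lambda>h. h *\<^sub>R F (pic F u0 n x))) (at x within {0..b})"
        using pic_deriv[OF cF] by (simp add: has_vector_derivative_def)
      show "0 \<in> {0..b}" using b by simp
      show "(\<lambda>n. pic F u0 (Suc n) 0) \<longlonglongrightarrow> u0" by (simp add: pic_zero)
      fix e :: real assume e: "e > 0"
      have "e / (L + 1) > 0" using e L by simp
      from ev[OF b(1) this]
      show "\<forall>\<^sub>F n in sequentially. \<forall>x\<in>{0..b}. \<forall>h. norm (h *\<^sub>R F (pic F u0 n x) - h *\<^sub>R F (y x)) \<le> e * norm h"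
      proof eventually_elim
        case (elim n)
        show ?case
        proof (intro ballI allI)
          fix x h assume x: "x \<in> {0..b}"
          have "norm (F (pic F u0 n x) - F (y x)) \<le> L * norm (pic F u0 n x - y x)" using lip by blast
          also have "\<dots> \<le> (L + 1) * (e / (L + 1))"
          proof (rule mult_mono)
            show "norm (pic F u0 n x - y x) \<le> e / (L + 1)" using elim x by (meson less_imp_le)
          qed (use L in auto)
          also have "\<dots> = e" using L by simp
          finally have "norm (F (pic F u0 n x) - F (y x)) \<le> e" .
          then have "\<bar>h\<bar> * norm (F (pic F u0 n x) - F (y x)) \<le> \<bar>h\<bar> * e" by (intro mult_left_mono) auto
          then show "norm (h *\<^sub>R F (pic F u0 n x) - h *\<^sub>R F (y x)) \<le> e * norm h"
            by (simp add: scaleR_diff_right[symmetric] mult.commute)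
        qed
      qed
    qed
    then obtain g where g: "\<And>x. x \<in> {0..b} \<Longrightarrow> (\<lambda>n. pic F u0 (Suc n) x) \<longlonglongrightarrow> g x"
      "\<And>x. x \<in> {0..b} \<Longrightarrow> (g has_derivative (\<lambda>h. h *\<^sub>R F (y x))) (at x within {0..b})" by blast
    have gy: "y x = g x" if "x \<in> {0..b}" for x
      using LIMSEQ_unique[OF conv[OF b(1) that, THEN LIMSEQ_Suc] g(1)[OF that]] .
    have "(y has_derivative (\<lambda>h. h *\<^sub>R F (y t))) (at t within {0..b})"
      by (rule has_derivative_transform[OF b(2) gy g(2)[OF b(2)]])
    then have "(y has_vector_derivative F (y t)) (at t within {0..b})"
      by (simp add: has_vector_derivative_def)
    then show ?thesis using at_Icc_Ici[OF t, of b] by (simp add: b_def)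
  qed
  moreover have "y 0 = u0" by (simp add: y_def d_def pic_zero)
  ultimately show ?thesis by blast
qed

definition clamp :: "real \<Rightarrow> real \<Rightarrow> real^'n \<Rightarrow> real^'n" where
  "clamp m M u = (\<chi> i. max m (min M (u $ i)))"

lemma clamp_lip: "norm (clamp m M u - clamp m M v) \<le> norm (u - v)"
proof (rule norm_le_componentwise_cart)
  fix i
  show "norm ((clamp m M u - clamp m M v) $ i) \<le> norm ((u - v) $ i)"
    by (auto simp: clamp_def max_def min_def)
qed

lemma clamp_norm: "norm (clamp m M (u::real^'n)) \<le> real CARD('n) * (\<bar>m\<bar> + \<bar>M\<bar>)"
proof -
  have "norm (clamp m M u) \<le> (\<Sum>i\<in>(UNIV::'n set). \<bar>clamp m M u $ i\<bar>)" by (rule norm_le_l1_cart)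
  also have "\<dots> \<le> (\<Sum>i\<in>(UNIV::'n set). \<bar>m\<bar> + \<bar>M\<bar>)"
    by (intro sum_mono) (auto simp: clamp_def max_def min_def)
  finally show ?thesis by simp
qed

lemma clamp_id: "(\<forall>i. m \<le> u $ i \<and> u $ i \<le> M) \<Longrightarrow> clamp m M u = u"
  by (simp add: clamp_def vec_eq_iff)

lemma clamp_range: "m \<le> M \<Longrightarrow> m \<le> clamp m M u $ i \<and> clamp m M u $ i \<le> M"
  by (simp add: clamp_def)

lemma q_sum_form:
  assumes "is_Q_matrix q"
  shows "(q *v z) $ i = (\<Sum>j\<in>UNIV. q $ i $ j * (z $ j - z $ i))"
proof -
  have "(\<Sum>j\<in>UNIV. q $ i $ j) = 0" using assms by (simp add: is_Q_matrix_def)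
  then have "(\<Sum>j\<in>UNIV. q $ i $ j * z $ i) = 0" by (simp add: sum_distrib_right[symmetric])
  then show ?thesis by (simp add: matrix_vector_mult_def algebra_simps sum_subtractf)
qed

lemma q_at_max:
  assumes "is_Q_matrix q" "\<forall>j. z $ j \<le> z $ i"
  shows "(q *v z) $ i \<le> 0"
  unfolding q_sum_form[OF assms(1)]
proof (rule sum_nonpos)
  fix j
  show "q $ i $ j * (z $ j - z $ i) \<le> 0"
  proof (cases "j = i")
    case False
    then have "q $ i $ j \<ge> 0" using assms(1) by (simp add: is_Q_matrix_def)
    then show ?thesis using assms(2) by (simp add: mult_nonneg_nonpos)
  qed simp
qed

lemma q_at_min:
  assumes "is_Q_matrix q" "\<forall>j. z $ j \<ge> z $ i"
  shows "(q *v z) $ i \<ge> 0"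
  unfolding q_sum_form[OF assms(1)]
proof (rule sum_nonneg)
  fix j
  show "q $ i $ j * (z $ j - z $ i) \<ge> 0"
  proof (cases "j = i")
    case False
    then have "q $ i $ j \<ge> 0" using assms(1) by (simp add: is_Q_matrix_def)
    then show ?thesis using assms(2) by simp
  qed simp
qed

section \<open>Lower Taylor bound for S_q\<close>

lemma Sq_lower:
  assumes Q: "is_Q_matrix q" and s: "0 \<le> s"
    and C: "\<forall>i. (q *v (q *v w + fq)) $ i \<ge> - 2 * C"
  shows "w + s *\<^sub>R (q *v w + fq) - vec (C * s^2) \<le> Sq q fq s w"
proof -
  define z where "z r = Sq q fq r w - (w + r *\<^sub>R (q *v w + fq) - vec (C * r^2))" for r
  define z' where "z' r = (q *v Sq q fq r w + fq) - ((q *v w + fq) - vec (C * (2 * r)))" for r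
  have dz: "(z has_vector_derivative z' r) (at r within {0..s})" if "r \<in> {0..s}" for r
  proof -
    have d1: "((\<lambda>r. Sq q fq r w) has_vector_derivative (q *v Sq q fq r w + fq)) (at r within {0..})"
      using that by (intro Sq_deriv) auto
    have d2a: "((\<lambda>r. r *\<^sub>R (q *v w + fq)) has_vector_derivative 1 *\<^sub>R (q *v w + fq)) (at r within {0..})"
      by (rule bounded_linear.has_vector_derivative[OF bounded_linear_scaleR_left has_vector_derivative_id])
    have d2b: "((\<lambda>r. vec (C * r^2)) has_vector_derivative vec (C * (2 * r))) (at r within {0..})"
      by (rule vd_from_comp) (auto intro!: derivative_eq_intros)
    have d2: "((\<lambda>r. w + r *\<^sub>R (q *v w + fq) - vec (C * r^2)) has_vector_derivative
        (0 + 1 *\<^sub>R (q *v w + fq) - vec (C * (2 * r)))) (at r within {0..})"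
      by (intro has_vector_derivative_diff has_vector_derivative_add has_vector_derivative_const d2a d2b)
    have "(z has_vector_derivative z' r) (at r within {0..})"
      unfolding z_def z'_def using has_vector_derivative_diff[OF d1 d2] by simp
    then show ?thesis by (rule has_vector_derivative_within_subset) auto
  qed
  have ge: "(q *v z r) $ i \<le> z' r $ i" if "r \<in> {0..s}" for r i
  proof -
    have "z' r - q *v z r = r *\<^sub>R (q *v (q *v w + fq)) + vec (2 * C * r) - q *v vec (C * r^2)"
      by (simp add: z_def z'_def matrix_vector_mult_diff_distrib matrix_vector_right_distrib
          matrix_vector_mult_scaleR algebra_simps)
    also have "q *v vec (C * r^2) = 0" using Q_one[OF Q] .
    finally have e: "(z' r - q *v z r) $ i = r * (q *v (q *v w + fq)) $ i + 2 * C * r" by simp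
    have "r * (- 2 * C) \<le> r * (q *v (q *v w + fq)) $ i"
      using C that by (intro mult_left_mono) auto
    then have "0 \<le> (z' r - q *v z r) $ i" unfolding e by (simp add: algebra_simps)
    then show ?thesis by simp
  qed
  have "z s $ i \<ge> 0" for i
    by (rule pos_lemma[OF Q_off[OF Q], of s z z']) (use dz ge s in \<open>auto simp: z_def Sq_zero\<close>)
  then show ?thesis by (simp add: z_def less_eq_vec_def)
qed

lemma Sq_lower_const:
  assumes Q: "is_Q_matrix q"
  shows "\<exists>C\<ge>0. \<forall>w. norm w \<le> B \<longrightarrow> (\<forall>i. (q *v (q *v w + fq)) $ i \<ge> - 2 * C)"
proof -
  obtain Cq where Cq: "Cq > 0" "\<forall>x. norm (q *v x) \<le> Cq * norm x" using mv_bound by blast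
  define C where "C = Cq * (Cq * \<bar>B\<bar> + norm fq) / 2"
  show ?thesis
  proof (intro exI conjI allI impI)
    show "C \<ge> 0" using Cq by (simp add: C_def)
    fix w :: "real^'a" and i assume w: "norm w \<le> B"
    have "\<bar>(q *v (q *v w + fq)) $ i\<bar> \<le> norm (q *v (q *v w + fq))" by (rule component_le_norm_cart)
    also have "\<dots> \<le> Cq * norm (q *v w + fq)" using Cq by blast
    also have "norm (q *v w + fq) \<le> Cq * \<bar>B\<bar> + norm fq"
    proof -
      have "norm (q *v w + fq) \<le> norm (q *v w) + norm fq" by (rule norm_triangle_ineq)
      also have "norm (q *v w) \<le> Cq * norm w" using Cq by blast
      also have "\<dots> \<le> Cq * \<bar>B\<bar>" using w Cq by (intro mult_left_mono) auto
      finally show ?thesis by simp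
    qed
    then have "Cq * norm (q *v w + fq) \<le> Cq * (Cq * \<bar>B\<bar> + norm fq)" using Cq by (intro mult_left_mono) auto
    finally show "(q *v (q *v w + fq)) $ i \<ge> - 2 * C" by (simp add: C_def abs_le_iff)
  qed
qed

lemma sorted_list_uniform:
  fixes g :: "nat \<Rightarrow> real"
  assumes "strict_mono g"
  shows "sorted_list_of_set (g ` {0..N}) = map g [0..<Suc N]"
proof -
  have "inj g" using assms strict_mono_imp_inj_on by blast
  have "sorted_wrt (<) (map g [0..<Suc N])"
    unfolding sorted_wrt_map
    by (rule sorted_wrt_mono_rel[OF _ sorted_wrt_upt[of 0 "Suc N"]]) (use assms in \<open>auto simp: strict_mono_def\<close>)
  moreover have "set (map g [0..<Suc N]) = g ` {0..N}"
    by (simp del: upt_Suc add: atLeastLessThanSuc_atLeastAtMost)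
  moreover have "length (map g [0..<Suc N]) = card (g ` {0..N})"
    using card_image[OF inj_on_subset[OF \<open>inj g\<close>]] by simp
  ultimately show ?thesis using sorted_list_of_set_unique[of "g ` {0..N}" "map g [0..<Suc N]"] by blast
qed

lemma diffs_uniform:
  "map2 (-) (tl (map g [0..<Suc N])) (map g [0..<Suc N]) = map (\<lambda>k. g (Suc k) - g k) [0..<N]"
  by (rule nth_equalityI) (auto simp: nth_tl simp del: upt_Suc)

lemma Epi_uniform:
  assumes h: "h > 0" and N: "N \<ge> 1"
  shows "Epi P f ((\<lambda>k. real k * h) ` {0..N}) = Ecomp P f (replicate N h)"
proof -
  define g where "g k = real k * h" for k
  have sm: "strict_mono g" using h by (auto simp: strict_mono_def g_def)
  have ne: "g ` {0..N} \<noteq> {0}"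
  proof
    assume "g ` {0..N} = {0}"
    then have "g N = 0" by auto
    then show False using h N by (simp add: g_def)
  qed
  have "map2 (-) (tl (map g [0..<Suc N])) (map g [0..<Suc N]) = map (\<lambda>k. h) [0..<N]"
    unfolding diffs_uniform by (simp add: g_def algebra_simps)
  also have "\<dots> = replicate N h" by (simp add: map_replicate_const)
  finally show ?thesis using ne sorted_list_uniform[OF sm, of N]
    unfolding g_def[abs_def] by (simp add: Epi_def Let_def)
qed

lemma uniform_partition:
  assumes h: "h > 0"
  shows "(\<lambda>k. real k * h) ` {0..N} \<in> partitions_at (real N * h)"
proof -
  have "Max ((\<lambda>k. real k * h) ` {0..N}) = real N * h"
    using h by (intro Max_eqI) (auto intro: mult_right_mono)
  moreover have "0 \<in> (\<lambda>k. real k * h) ` {0..N}" by (rule image_eqI[of _ _ 0]) auto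
  ultimately show ?thesis using h by (auto simp: partitions_at_def partitions_def)
qed

locale nis =
  fixes P :: "(real^'n^'n) set" and f :: "real^'n^'n \<Rightarrow> real^'n" and q0 :: "real^'n^'n"
  assumes Qmat: "\<forall>q\<in>P. is_Q_matrix q"
    and q0: "q0 \<in> P" and fq0: "f q0 = 0" and fle: "\<forall>q\<in>P. f q \<le> 0"
    and Qfin: "\<forall>u i. bdd_above ((\<lambda>q. (q *v u + f q) $ i) ` P)"
begin

lemma Pne: "P \<noteq> {}" using q0 by auto

lemma Sq_bdd: "0 \<le> h \<Longrightarrow> bdd_above ((\<lambda>q. Sq q (f q) h u $ i) ` P)"
  by (rule bdd_vec[of _ _ "norm u"]) (use Sq_le_const Qmat fle vec_norm_bound in blast)

lemma E_le_const: "0 \<le> h \<Longrightarrow> w \<le> vec c \<Longrightarrow> Eop P f h w \<le> vec c"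
  unfolding Eop_def by (rule vsup_le[OF Pne]) (use Sq_le_const Qmat fle in blast)

lemma E_mono: "0 \<le> h \<Longrightarrow> w \<le> w' \<Longrightarrow> Eop P f h w \<le> Eop P f h w'"
  unfolding Eop_def by (rule vsup_mono[OF Pne Sq_bdd]) (use Sq_mono Qmat in blast)+

lemma E_zero: "Eop P f 0 w = w"
  unfolding Eop_def Sq_zero by (rule vsup_const[OF Pne])

lemma Sq_le_E: "0 \<le> h \<Longrightarrow> q \<in> P \<Longrightarrow> Sq q (f q) h w \<le> Eop P f h w"
  unfolding Eop_def by (rule vsup_ge[OF Sq_bdd])

lemma Ecomp_le_const: "\<forall>h\<in>set hs. h \<ge> 0 \<Longrightarrow> w \<le> vec c \<Longrightarrow> Ecomp P f hs w \<le> vec c"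
  by (induction hs) (auto intro: E_le_const)

lemma Epi_cases:
  assumes "\<pi> \<in> partitions"
  obtains "\<pi> = {0}" "Epi P f \<pi> = id"
  | ts where "\<pi> \<noteq> {0}" "ts = sorted_list_of_set \<pi>" "Epi P f \<pi> = Ecomp P f (map2 (-) (tl ts) ts)"
       "\<forall>h\<in>set (map2 (-) (tl ts) ts). h \<ge> 0" "sum_list (map2 (-) (tl ts) ts) = Max \<pi>"
proof (cases "\<pi> = {0}")
  case True
  then show ?thesis using that(1) E_zero by (auto simp: Epi_def fun_eq_iff)
next
  case False
  define ts where "ts = sorted_list_of_set \<pi>"
  have fin: "finite \<pi>" and sub: "\<pi> \<subseteq> {0..}" and z: "0 \<in> \<pi>" using assms by (auto simp: partitions_def)
  have st: "sorted ts" and set: "set ts = \<pi>" using fin by (auto simp: ts_def)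
  have ne: "ts \<noteq> []" using set z by auto
  have "\<pi> \<noteq> {}" using z by auto
  then have "hd ts = Min \<pi>" unfolding ts_def by (simp add: sorted_list_of_set_nonempty[OF fin])
  also have "Min \<pi> = 0" using fin sub z by (intro Min_eqI) auto
  finally have hd: "hd ts = 0" .
  have "last ts = Max \<pi>" using last_sorted_Max[OF st ne] set by simp
  then have "sum_list (map2 (-) (tl ts) ts) = Max \<pi>" using diffs_sum[OF ne] hd by simp
  moreover have "\<forall>h\<in>set (map2 (-) (tl ts) ts). h \<ge> 0" using diffs_nonneg[OF st] by blast
  ultimately show ?thesis using that(2)[OF False ts_def] False by (simp add: Epi_def ts_def Let_def)
qed

lemma Epi_le_const:
  assumes "\<pi> \<in> partitions" "w \<le> vec c"
  shows "Epi P f \<pi> w \<le> vec c"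
  using assms(1)
proof (cases rule: Epi_cases)
  case 1 then show ?thesis using assms(2) by simp
next
  case (2 ts)
  have "Ecomp P f (map2 (-) (tl ts) ts) w \<le> vec c" using 2(4) assms(2) by (rule Ecomp_le_const)
  with 2(3) show ?thesis by simp
qed

lemma Epi_bdd: "bdd_above ((\<lambda>\<pi>. Epi P f \<pi> u $ i) ` partitions_at t)"
  by (rule bdd_vec[of _ _ "norm u"]) (use Epi_le_const vec_norm_bound in \<open>auto simp: partitions_at_def\<close>)

lemma Q_comp: "Qop P f u $ i = (SUP q\<in>P. (q *v u + f q) $ i)"
  by (simp add: Qop_def vsup_def)

lemma Q_convex: "convex_on UNIV (\<lambda>u. Qop P f u $ i)"
proof (rule convex_onI)
  fix t :: real and x y :: "real^'n" assume t: "0 < t" "t < 1"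
  show "Qop P f ((1 - t) *\<^sub>R x + t *\<^sub>R y) $ i \<le> (1 - t) * Qop P f x $ i + t * Qop P f y $ i"
    unfolding Q_comp
  proof (rule cSUP_least[OF Pne])
    fix q assume q: "q \<in> P"
    have "(q *v ((1 - t) *\<^sub>R x + t *\<^sub>R y) + f q) $ i = (1 - t) * (q *v x + f q) $ i + t * (q *v y + f q) $ i"
      by (simp add: matrix_vector_right_distrib matrix_vector_mult_scaleR algebra_simps)
    also have "\<dots> \<le> (1 - t) * (SUP q\<in>P. (q *v x + f q) $ i) + t * (SUP q\<in>P. (q *v y + f q) $ i)"
      using t q Qfin by (intro add_mono mult_left_mono cSUP_upper) auto
    finally show "(q *v ((1 - t) *\<^sub>R x + t *\<^sub>R y) + f q) $ i \<le> (1 - t) * (SUP q\<in>P. (q *v x + f q) $ i) + t * (SUP q\<in>P. (q *v y + f q) $ i)" .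
  qed
qed simp

lemma Q_comp_cont: "continuous_on UNIV (\<lambda>u. Qop P f u $ i)"
  by (rule convex_on_continuous[OF open_UNIV Q_convex])

lemma Q_cont: "continuous_on UNIV (Qop P f)"
proof -
  have e: "Qop P f = (\<lambda>u. \<chi> i. Qop P f u $ i)" by (simp add: vec_eq_iff fun_eq_iff)
  show ?thesis by (subst e) (rule continuous_on_vec_lambda[OF Q_comp_cont])
qed

lemma Q_lip: "\<exists>L. \<forall>x y. norm x \<le> R \<longrightarrow> norm y \<le> R \<longrightarrow> norm (Qop P f x - Qop P f y) \<le> L * norm (x - y)"
proof -
  have "\<forall>i. \<exists>L. \<forall>x y. norm x \<le> R \<longrightarrow> norm y \<le> R \<longrightarrow> \<bar>Qop P f x $ i - Qop P f y $ i\<bar> \<le> L * norm (x - y)"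
    using conv_lip[OF Q_convex Q_comp_cont] by blast
  then obtain L where L: "\<And>i x y. norm x \<le> R \<Longrightarrow> norm y \<le> R \<Longrightarrow> \<bar>Qop P f x $ i - Qop P f y $ i\<bar> \<le> L i * norm (x - y)"
    by metis
  show ?thesis
  proof (intro exI allI impI)
    fix x y :: "real^'n" assume x: "norm x \<le> R" and y: "norm y \<le> R"
    have "norm (Qop P f x - Qop P f y) \<le> (\<Sum>i\<in>UNIV. \<bar>(Qop P f x - Qop P f y) $ i\<bar>)" by (rule norm_le_l1_cart)
    also have "\<dots> \<le> (\<Sum>i\<in>UNIV. L i * norm (x - y))" using L[OF x y] by (intro sum_mono) simp
    finally show "norm (Qop P f x - Qop P f y) \<le> (\<Sum>i\<in>UNIV. L i) * norm (x - y)" by (simp add: sum_distrib_right)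
  qed
qed

lemma Q_at_max:
  assumes "\<forall>j. z $ j \<le> z $ i"
  shows "Qop P f z $ i \<le> 0"
  unfolding Q_comp
proof (rule cSUP_least[OF Pne])
  fix q assume q: "q \<in> P"
  have "(q *v z) $ i \<le> 0" using q_at_max[OF _ assms] Qmat q by blast
  moreover have "f q $ i \<le> 0" using fle q by (simp add: less_eq_vec_def)
  ultimately show "(q *v z + f q) $ i \<le> 0" by simp
qed

lemma Q_at_min:
  assumes "\<forall>j. z $ j \<ge> z $ i"
  shows "Qop P f z $ i \<ge> 0"
proof -
  have "(q0 *v z) $ i \<ge> 0" using q_at_min[OF _ assms] Qmat q0 by blast
  also have "(q0 *v z) $ i = (q0 *v z + f q0) $ i" by (simp add: fq0)
  also have "\<dots> \<le> Qop P f z $ i" unfolding Q_comp by (rule cSUP_upper[OF q0]) (use Qfin in auto)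
  finally show ?thesis .
qed

lemma exists_sol:
  assumes box: "\<forall>i. m \<le> u0 $ i \<and> u0 $ i \<le> M"
  shows "\<exists>y. y 0 = u0 \<and> (\<forall>t\<ge>0. (y has_vector_derivative Qop P f (y t)) (at t within {0..}))
          \<and> (\<forall>t\<ge>0. \<forall>i. m \<le> y t $ i \<and> y t $ i \<le> M)"
proof -
  obtain i0 :: 'n where True by simp
  have "m \<le> u0 $ i0 \<and> u0 $ i0 \<le> M" using box by blast
  then have mM: "m \<le> M" by linarith
  define R where "R = real CARD('n) * (\<bar>m\<bar> + \<bar>M\<bar>)"
  obtain L0 where L0: "\<And>x y. norm x \<le> R \<Longrightarrow> norm y \<le> R \<Longrightarrow> norm (Qop P f x - Qop P f y) \<le> L0 * norm (x - y)"
    using Q_lip[of R] by blast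
  define L where "L = max L0 0"
  define F where "F u = Qop P f (clamp m M u)" for u
  have lip: "\<forall>x y. norm (F x - F y) \<le> L * norm (x - y)"
  proof (intro allI)
    fix x y :: "real^'n"
    have "norm (F x - F y) \<le> L0 * norm (clamp m M x - clamp m M y)"
      unfolding F_def by (intro L0) (simp_all only: R_def clamp_norm)
    also have "\<dots> \<le> L * norm (clamp m M x - clamp m M y)" by (intro mult_right_mono) (simp_all add: L_def)
    also have "\<dots> \<le> L * norm (x - y)" by (intro mult_left_mono clamp_lip) (auto simp: L_def)
    finally show "norm (F x - F y) \<le> L * norm (x - y)" .
  qed
  obtain y where y0: "y 0 = u0" and dy: "\<forall>t\<ge>0. (y has_vector_derivative F (y t)) (at t within {0..})"
  proof -
    have "L \<ge> 0" by (simp add: L_def)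
    from picard_exists[OF lip this, of u0] show ?thesis using that by blast
  qed
  have dyT: "(y has_vector_derivative F (y s)) (at s within {0..T})" if "s \<in> {0..T}" for s T
  proof (rule has_vector_derivative_within_subset[of _ _ _ "{0..}"])
    show "(y has_vector_derivative F (y s)) (at s within {0..})" using dy that by simp
  qed auto
  have low: "m \<le> y t $ i" if t: "0 \<le> t" for t i
  proof -
    have "(y t - vec m) $ i \<ge> 0"
    proof (rule neg_lemma[of t "\<lambda>s. y s - vec m" "\<lambda>s. F (y s)" 0])
      show "\<forall>s\<in>{0..t}. ((\<lambda>s. y s - vec m) has_vector_derivative F (y s)) (at s within {0..t})"
      proof
        fix s assume s: "s \<in> {0..t}"
        have "((\<lambda>s. y s - vec m) has_vector_derivative F (y s) - 0) (at s within {0..t})"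
          by (intro has_vector_derivative_diff dyT s has_vector_derivative_const)
        then show "((\<lambda>s. y s - vec m) has_vector_derivative F (y s)) (at s within {0..t})" by simp
      qed
      show "\<forall>i. 0 \<le> (y 0 - vec m) $ i" using box y0 by simp
      show "t \<in> {0..t}" using t by simp
      show "\<forall>s\<in>{0..t}. (\<Sum>i\<in>UNIV. min ((y s - vec m) $ i) 0 * F (y s) $ i) \<le> 0 * (\<Sum>i\<in>UNIV. (min ((y s - vec m) $ i) 0)\<^sup>2)"
      proof (intro ballI)
        fix s assume s: "s \<in> {0..t}"
        have "min ((y s - vec m) $ i) 0 * F (y s) $ i \<le> 0" for i
        proof (cases "y s $ i < m")
          case True
          have ci: "clamp m M (y s) $ i = m" using True mM by (simp add: clamp_def)
          have "\<forall>j. clamp m M (y s) $ j \<ge> clamp m M (y s) $ i"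
            unfolding ci using clamp_range[OF mM] by blast
          then have "F (y s) $ i \<ge> 0" unfolding F_def by (rule Q_at_min)
          then show ?thesis using True by (simp add: mult_nonpos_nonneg)
        qed simp
        then show "(\<Sum>i\<in>UNIV. min ((y s - vec m) $ i) 0 * F (y s) $ i) \<le> 0 * (\<Sum>i\<in>UNIV. (min ((y s - vec m) $ i) 0)\<^sup>2)"
          by (simp add: sum_nonpos)
      qed
    qed
    then show ?thesis by simp
  qed
  have up: "y t $ i \<le> M" if t: "0 \<le> t" for t i
  proof -
    have "(vec M - y t) $ i \<ge> 0"
    proof (rule neg_lemma[of t "\<lambda>s. vec M - y s" "\<lambda>s. - F (y s)" 0])
      show "\<forall>s\<in>{0..t}. ((\<lambda>s. vec M - y s) has_vector_derivative - F (y s)) (at s within {0..t})"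
      proof
        fix s assume s: "s \<in> {0..t}"
        have "((\<lambda>s. vec M - y s) has_vector_derivative 0 - F (y s)) (at s within {0..t})"
          by (intro has_vector_derivative_diff dyT s has_vector_derivative_const)
        then show "((\<lambda>s. vec M - y s) has_vector_derivative - F (y s)) (at s within {0..t})" by simp
      qed
      show "\<forall>i. 0 \<le> (vec M - y 0) $ i" using box y0 by simp
      show "t \<in> {0..t}" using t by simp
      show "\<forall>s\<in>{0..t}. (\<Sum>i\<in>UNIV. min ((vec M - y s) $ i) 0 * (- F (y s)) $ i) \<le> 0 * (\<Sum>i\<in>UNIV. (min ((vec M - y s) $ i) 0)\<^sup>2)"
      proof (intro ballI)
        fix s assume s: "s \<in> {0..t}"
        have "min ((vec M - y s) $ i) 0 * (- F (y s)) $ i \<le> 0" for i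
        proof (cases "y s $ i > M")
          case True
          have ci: "clamp m M (y s) $ i = M" using True mM by (simp add: clamp_def)
          have "\<forall>j. clamp m M (y s) $ j \<le> clamp m M (y s) $ i"
            unfolding ci using clamp_range[OF mM] by blast
          then have "F (y s) $ i \<le> 0" unfolding F_def by (rule Q_at_max)
          then show ?thesis using True by (simp add: mult_nonpos_nonpos)
        qed simp
        then show "(\<Sum>i\<in>UNIV. min ((vec M - y s) $ i) 0 * (- F (y s)) $ i) \<le> 0 * (\<Sum>i\<in>UNIV. (min ((vec M - y s) $ i) 0)\<^sup>2)"
          by (simp add: sum_nonpos)
      qed
    qed
    then show ?thesis by simp
  qed
  have FQ: "F (y t) = Qop P f (y t)" if "0 \<le> t" for t
    unfolding F_def using low[OF that] up[OF that] by (simp add: clamp_id)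
  show ?thesis
  proof (intro exI conjI allI impI)
    show "y 0 = u0" by (rule y0)
    fix t :: real assume t: "0 \<le> t"
    show "(y has_vector_derivative Qop P f (y t)) (at t within {0..})"
      using dy t FQ[OF t] by metis
    fix i
    show "m \<le> y t $ i" by (rule low[OF t])
    show "y t $ i \<le> M" by (rule up[OF t])
  qed
qed

lemma E_shift_ge:
  assumes h: "0 \<le> h"
  shows "Eop P f h w - vec c \<le> Eop P f h (w - vec c)"
proof -
  have "Eop P f h w \<le> Eop P f h (w - vec c) + vec c"
    unfolding Eop_def[of P f h w]
  proof (rule vsup_le[OF Pne])
    fix q assume q: "q \<in> P"
    have "Sq q (f q) h w = Sq q (f q) h ((w - vec c) + vec c)" by simp
    also have "\<dots> = Sq q (f q) h (w - vec c) + vec c" using Sq_shift Qmat q by blast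
    also have "\<dots> \<le> Eop P f h (w - vec c) + vec c" using Sq_le_E[OF h q] by simp
    finally show "Sq q (f q) h w \<le> Eop P f h (w - vec c) + vec c" .
  qed
  then show ?thesis by (simp add: algebra_simps)
qed

lemma near_opt:
  assumes K: "compact K" and e: "e > 0"
  shows "\<exists>F. finite F \<and> F \<subseteq> P \<and> (\<forall>w\<in>K. \<forall>i. \<exists>q\<in>F. Qop P f w $ i - e < (q *v w + f q) $ i)"
proof -
  have ex: "\<forall>i. \<exists>F. finite F \<and> F \<subseteq> P \<and> (\<forall>w\<in>K. \<exists>q\<in>F. Qop P f w $ i - e < (q *v w + f q) $ i)"
  proof
    fix i
    let ?U = "\<lambda>q. {w. Qop P f w $ i - e < (q *v w + f q) $ i}"
    have op: "open (?U q)" for q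
    proof (rule open_Collect_less)
      show "continuous_on UNIV (\<lambda>w. Qop P f w $ i - e)"
        by (intro continuous_on_diff Q_comp_cont continuous_on_const)
      show "continuous_on UNIV (\<lambda>w. (q *v w + f q) $ i)"
      proof -
        have c1: "continuous_on UNIV (\<lambda>w. q *v w + f q)"
          by (intro continuous_on_add continuous_on_const matrix_vector_mult_linear_continuous_on)
        show ?thesis
          by (rule continuous_on_compose2[OF linear_continuous_on[OF bounded_linear_vec_nth] c1]) auto
      qed
    qed
    have cov: "K \<subseteq> \<Union> (?U ` P)"
    proof
      fix w assume "w \<in> K"
      have "Qop P f w $ i - e < (SUP q\<in>P. (q *v w + f q) $ i)" using e by (simp add: Q_comp)
      moreover have bdd: "bdd_above ((\<lambda>q. (q *v w + f q) $ i) ` P)" by (rule Qfin[rule_format])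
      ultimately obtain q where q: "q \<in> P" "Qop P f w $ i - e < (q *v w + f q) $ i"
        using less_cSUP_iff[OF Pne bdd] by blast
      then have "w \<in> ?U q" by simp
      with q(1) show "w \<in> \<Union> (?U ` P)" by (rule UN_I)
    qed
    obtain F where F: "F \<subseteq> P" "finite F" "K \<subseteq> \<Union> (?U ` F)"
      by (rule compactE_image[OF K op cov])
    show "\<exists>F. finite F \<and> F \<subseteq> P \<and> (\<forall>w\<in>K. \<exists>q\<in>F. Qop P f w $ i - e < (q *v w + f q) $ i)"
    proof (intro exI conjI ballI)
      fix w assume "w \<in> K"
      with F(3) have "w \<in> \<Union> (?U ` F)" by (rule subsetD)
      then obtain q where "q \<in> F" "w \<in> ?U q" by (rule UN_E)
      then show "\<exists>q\<in>F. Qop P f w $ i - e < (q *v w + f q) $ i" by auto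
    qed (use F in simp_all)
  qed
  from choice[OF ex] obtain F where F: "\<And>i. finite (F i) \<and> F i \<subseteq> P \<and> (\<forall>w\<in>K. \<exists>q\<in>F i. Qop P f w $ i - e < (q *v w + f q) $ i)"
    by blast
  show ?thesis
  proof (intro exI conjI)
    show "finite (\<Union>i. F i)" using F by auto
    show "(\<Union>i. F i) \<subseteq> P" using F by auto
    show "\<forall>w\<in>K. \<forall>i. \<exists>q\<in>\<Union>i. F i. Qop P f w $ i - e < (q *v w + f q) $ i"
    proof (intro ballI allI)
      fix w i assume "w \<in> K"
      then obtain q where "q \<in> F i" "Qop P f w $ i - e < (q *v w + f q) $ i" using F[of i] by blast
      then show "\<exists>q\<in>\<Union>i. F i. Qop P f w $ i - e < (q *v w + f q) $ i" by blast
    qed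
  qed
qed

lemma A_le_Q: "q \<in> P \<Longrightarrow> q *v u + f q \<le> Qop P f u"
  unfolding Qop_def by (rule vsup_ge) (use Qfin in auto)

lemma comp_step:
  assumes der: "\<forall>t\<ge>0. (v has_vector_derivative v' t) (at t within {0..})"
    and eq: "\<forall>t\<ge>0. v' t = Qop P f (v t)"
    and q: "q \<in> P" and r: "0 \<le> r" and h: "0 \<le> h"
  shows "Sq q (f q) h (v r) \<le> v (r + h)"
proof -
  define w where "w s = v (r + s) - Sq q (f q) s (v r)" for s
  have dw: "(w has_vector_derivative (v' (r + s) - (q *v Sq q (f q) s (v r) + f q))) (at s within {0..h})"
    if "s \<in> {0..h}" for s
  proof -
    have "(w has_vector_derivative (v' (r + s) - (q *v Sq q (f q) s (v r) + f q))) (at s within {0..})"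
      unfolding w_def using that
      by (intro has_vector_derivative_diff shift_deriv[OF der r] Sq_deriv) auto
    then show ?thesis by (rule has_vector_derivative_within_subset) auto
  qed
  have ge: "(q *v w s) $ i \<le> (v' (r + s) - (q *v Sq q (f q) s (v r) + f q)) $ i" if "s \<in> {0..h}" for s i
  proof -
    have "(q *v v (r + s) + f q) $ i \<le> v' (r + s) $ i"
      using A_le_Q[OF q, of "v (r+s)"] eq that r by (auto simp: less_eq_vec_def)
    then show ?thesis by (simp add: w_def matrix_vector_mult_diff_distrib)
  qed
  have "w h $ i \<ge> 0" for i
    by (rule pos_lemma[OF Q_off[of q], of h w "\<lambda>s. v' (r + s) - (q *v Sq q (f q) s (v r) + f q)"]) (use Qmat q dw ge h in \<open>auto simp: w_def Sq_zero\<close>)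
  then show ?thesis by (simp add: w_def less_eq_vec_def)
qed

lemma Ecomp_upper:
  assumes der: "\<forall>t\<ge>0. (v has_vector_derivative v' t) (at t within {0..})"
    and eq: "\<forall>t\<ge>0. v' t = Qop P f (v t)"
    and hs: "\<forall>h\<in>set hs. h \<ge> 0" and r: "0 \<le> r"
  shows "Ecomp P f hs (v r) \<le> v (r + sum_list hs)"
  using hs
proof (induction hs)
  case (Cons h hs)
  have sl: "0 \<le> sum_list hs" using Cons.prems by (intro sum_list_nonneg) auto
  have "Ecomp P f (h # hs) (v r) = Eop P f h (Ecomp P f hs (v r))" by simp
  also have "\<dots> \<le> Eop P f h (v (r + sum_list hs))"
    using Cons by (intro E_mono) auto
  also have "\<dots> \<le> v (r + sum_list hs + h)"
    unfolding Eop_def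
    by (rule vsup_le[OF Pne], rule comp_step[OF der eq]) (use Cons.prems r sl in auto)
  finally show ?case by (simp add: algebra_simps)
qed simp

lemma nisio_upper:
  assumes der: "\<forall>t\<ge>0. (v has_vector_derivative v' t) (at t within {0..})"
    and eq: "\<forall>t\<ge>0. v' t = Qop P f (v t)"
    and t: "0 \<le> t"
  shows "nisio P f t (v 0) \<le> v t"
  unfolding nisio_def
proof (rule vsup_le)
  show "partitions_at t \<noteq> {}"
    using t by (auto simp: partitions_at_def partitions_def intro!: exI[of _ "{0,t}"])
  fix \<pi> assume "\<pi> \<in> partitions_at t"
  then have pi: "\<pi> \<in> partitions" and M: "Max \<pi> = t" by (auto simp: partitions_at_def)
  from pi show "Epi P f \<pi> (v 0) \<le> v t"
  proof (cases rule: Epi_cases)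
    case 1 then show ?thesis using M by simp
  next
    case (2 ts)
    then show ?thesis using Ecomp_upper[OF der eq, of "map2 (-) (tl ts) ts" 0] M by simp
  qed
qed


lemma cont_of_der:
  assumes der: "\<forall>t\<ge>0. (v has_vector_derivative v' t) (at t within {0..})"
  shows "continuous_on {0..} v"
  unfolding continuous_on_eq_continuous_within
proof
  fix x :: real assume "x \<in> {0..}"
  then have "(v has_vector_derivative v' x) (at x within {0..})" using der by simp
  then show "continuous (at x within {0..}) v" by (rule has_vector_derivative_continuous)
qed

lemma mvt_comp:
  assumes der: "\<forall>t\<ge>0. (v has_vector_derivative v' t) (at t within {0..})"
    and s: "0 \<le> s" and h: "0 \<le> h"
  shows "\<exists>x\<in>{s..s+h}. v (s + h) $ j - v s $ j = h * v' x $ j"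
proof -
  have "\<exists>x\<in>{s..s+h}. v (s + h) $ j - v s $ j = (\<lambda>d. d * v' x $ j) (s + h - s)"
  proof (rule mvt_very_simple)
    show "s \<le> s + h" using h by simp
    fix x assume x: "s \<le> x" "x \<le> s + h"
    have "(v has_vector_derivative v' x) (at x within {0..})" using der x s by simp
    then have "((\<lambda>x. v x $ j) has_real_derivative v' x $ j) (at x within {0..})" by (rule vd_comp)
    then have "((\<lambda>x. v x $ j) has_real_derivative v' x $ j) (at x within {s..s+h})"
      by (rule DERIV_subset) (use s in auto)
    moreover have "(\<lambda>d. d * v' x $ j) = (*) (v' x $ j)" by (auto simp: mult.commute)
    ultimately show "((\<lambda>x. v x $ j) has_derivative (\<lambda>d. d * v' x $ j)) (at x within {s..s+h})"
      by (simp add: has_field_derivative_def)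
  qed
  then show ?thesis by simp
qed

lemma nisio_lower:
  assumes der: "\<forall>t\<ge>0. (v has_vector_derivative v' t) (at t within {0..})"
    and eq: "\<forall>t\<ge>0. v' t = Qop P f (v t)"
    and t: "0 \<le> t"
  shows "v t \<le> nisio P f t (v 0)"
proof -
  have ge_Epi: "Epi P f \<pi> (v 0) \<le> nisio P f t (v 0)" if "\<pi> \<in> partitions_at t" for \<pi>
    unfolding nisio_def by (rule vsup_ge[OF Epi_bdd that])
  have contv: "continuous_on {0..} v" by (rule cont_of_der[OF der])
  show ?thesis
  proof (cases "t = 0")
    case True
    have "{0} \<in> partitions_at t" using True by (simp add: partitions_at_def partitions_def)
    from ge_Epi[OF this] show ?thesis using True E_zero by (simp add: Epi_def)
  next
    case False
    then have tpos: "t > 0" using t by simp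
    have main: "v t $ i \<le> nisio P f t (v 0) $ i + \<epsilon>" if \<epsilon>: "\<epsilon> > 0" for i \<epsilon>
    proof -
      define \<eta> where "\<eta> = \<epsilon> / (3 * (t + 1))"
      have \<eta>: "\<eta> > 0" using \<epsilon> t by (simp add: \<eta>_def)
      have cK: "compact (v ` {0..t})"
        by (intro compact_continuous_image continuous_on_subset[OF contv]) auto
      obtain B where B0: "\<forall>x\<in>{0..t}. norm (v x) \<le> B"
        using compact_imp_bounded[OF cK] unfolding bounded_iff by auto
      have B: "\<And>s. s \<in> {0..t} \<Longrightarrow> norm (v s) \<le> B" using B0 by blast
      obtain F where F: "finite F" "F \<subseteq> P"
        "\<forall>w\<in>v ` {0..t}. \<forall>i. \<exists>q\<in>F. Qop P f w $ i - \<eta> < (q *v w + f q) $ i"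
        using near_opt[OF cK \<eta>] by blast
      have "\<forall>q\<in>F. \<exists>C\<ge>0. \<forall>w. norm w \<le> B \<longrightarrow> (\<forall>i. (q *v (q *v w + f q)) $ i \<ge> - 2 * C)"
      proof
        fix q assume "q \<in> F"
        then have "is_Q_matrix q" using F(2) Qmat by blast
        then show "\<exists>C\<ge>0. \<forall>w. norm w \<le> B \<longrightarrow> (\<forall>i. (q *v (q *v w + f q)) $ i \<ge> - 2 * C)"
          by (rule Sq_lower_const)
      qed
      from bchoice[OF this] obtain Cf where Cf: "\<And>q. q \<in> F \<Longrightarrow> Cf q \<ge> 0 \<and> (\<forall>w. norm w \<le> B \<longrightarrow> (\<forall>i. (q *v (q *v w + f q)) $ i \<ge> - 2 * Cf q))"
        by blast
      define C where "C = (\<Sum>q\<in>F. Cf q)"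
      have CfC: "Cf q \<le> C" if "q \<in> F" for q
        unfolding C_def by (rule member_le_sum) (use Cf F(1) that in auto)
      have C0: "C \<ge> 0" unfolding C_def by (rule sum_nonneg) (use Cf in auto)
      have cQv: "continuous_on {0..t+1} (\<lambda>s. Qop P f (v s))"
        by (rule continuous_on_compose2[OF Q_cont continuous_on_subset[OF contv]]) auto
      have "uniformly_continuous_on {0..t+1} (\<lambda>s. Qop P f (v s))"
        by (rule compact_uniformly_continuous[OF cQv]) simp
      then obtain \<delta> where \<delta>: "\<delta> > 0"
        "\<And>x y. x \<in> {0..t+1} \<Longrightarrow> y \<in> {0..t+1} \<Longrightarrow> dist y x < \<delta> \<Longrightarrow> dist (Qop P f (v y)) (Qop P f (v x)) < \<eta>"
        unfolding uniformly_continuous_on_def using \<eta> by metis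
      define \<delta>' where "\<delta>' = min (min \<delta> 1) (\<eta> / (C + 1))"
      have \<delta>': "\<delta>' > 0" using \<delta> \<eta> C0 by (simp add: \<delta>'_def)
      obtain N :: nat where N: "t / \<delta>' < real N" using reals_Archimedean2 by blast
      have Npos: "real N > 0" using N tpos \<delta>' by (smt (verit) divide_pos_pos)
      then have N1: "N \<ge> 1" by simp
      define h where "h = t / real N"
      have hpos: "h > 0" using tpos Npos by (simp add: h_def)
      have Nh: "real N * h = t" using Npos by (simp add: h_def)
      have hlt: "h < \<delta>'" using N Npos \<delta>' tpos by (simp add: h_def field_simps)
      have hd: "h < \<delta>" and h1: "h \<le> 1" and hC: "C * h \<le> \<eta>"
      proof -
        show "h < \<delta>" using hlt by (simp add: \<delta>'_def)
        show "h \<le> 1" using hlt by (simp add: \<delta>'_def)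
        have "h < \<eta> / (C + 1)" using hlt by (simp add: \<delta>'_def)
        then have "(C + 1) * h < \<eta>" using C0 by (simp add: field_simps)
        then show "C * h \<le> \<eta>" using hpos by (simp add: algebra_simps)
      qed
      have step: "v (s + h) $ j - 3 * h * \<eta> \<le> Eop P f h (v s) $ j" if s: "s \<in> {0..t}" for s j
      proof -
        obtain q where q: "q \<in> F" "Qop P f (v s) $ j - \<eta> < (q *v v s + f q) $ j"
          using F(3) s by blast
        have qP: "q \<in> P" using q F(2) by blast
        have Qq: "is_Q_matrix q" using qP Qmat by blast
        have lowS: "v s + h *\<^sub>R (q *v v s + f q) - vec (Cf q * h^2) \<le> Sq q (f q) h (v s)"
          by (rule Sq_lower[OF Qq]) (use hpos Cf[OF q(1)] B[OF s] in auto)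
        have SE: "Sq q (f q) h (v s) \<le> Eop P f h (v s)" using Sq_le_E[OF _ qP] hpos by simp
        obtain x where x: "x \<in> {s..s+h}" "v (s + h) $ j - v s $ j = h * v' x $ j"
          using mvt_comp[OF der, of s h j] s hpos by auto
        have "dist (Qop P f (v x)) (Qop P f (v s)) < \<eta>"
          using \<delta>(2)[of s x] x s hd h1 by (auto simp: dist_real_def)
        then have "Qop P f (v x) $ j - Qop P f (v s) $ j < \<eta>"
          using component_le_norm_cart[of "Qop P f (v x) - Qop P f (v s)" j] by (simp add: dist_norm)
        then have vx: "v' x $ j \<le> Qop P f (v s) $ j + \<eta>" using eq x s by auto
        have A: "v (s + h) $ j \<le> v s $ j + h * (Qop P f (v s) $ j + \<eta>)"
        proof -
          have "h * v' x $ j \<le> h * (Qop P f (v s) $ j + \<eta>)" using vx hpos by (intro mult_left_mono) auto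
          then show ?thesis using x(2) by linarith
        qed
        have B1: "h * (Qop P f (v s) $ j - \<eta>) \<le> h * (q *v v s + f q) $ j"
          using q(2) hpos by (intro mult_left_mono) auto
        have B2: "Cf q * h^2 \<le> \<eta> * h"
        proof -
          have "Cf q * h^2 = (Cf q * h) * h" by (simp add: power2_eq_square)
          also have "\<dots> \<le> (C * h) * h" using CfC[OF q(1)] hpos by (intro mult_right_mono) auto
          also have "\<dots> \<le> \<eta> * h" using hC hpos by (intro mult_right_mono) auto
          finally show ?thesis .
        qed
        have "v s $ j + h * (q *v v s + f q) $ j - Cf q * h^2 \<le> Sq q (f q) h (v s) $ j"
          using lowS by (simp add: less_eq_vec_def)
        moreover have "Sq q (f q) h (v s) $ j \<le> Eop P f h (v s) $ j"
          using SE by (simp add: less_eq_vec_def)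
        moreover have A': "v (s + h) $ j \<le> v s $ j + h * Qop P f (v s) $ j + h * \<eta>"
          using A by (simp add: distrib_left)
        moreover have B1': "h * Qop P f (v s) $ j - h * \<eta> \<le> h * (q *v v s + f q) $ j"
          using B1 by (simp add: right_diff_distrib)
        moreover have B2': "Cf q * h^2 \<le> h * \<eta>" using B2 by (simp add: mult.commute)
        moreover have "3 * h * \<eta> = 3 * (h * \<eta>)" by simp
        ultimately show ?thesis by linarith
      qed
      have ind: "k \<le> N \<Longrightarrow> v (real k * h) - vec (real k * h * (3 * \<eta>)) \<le> Ecomp P f (replicate k h) (v 0)" for k
      proof (induction k)
        case 0 then show ?case by simp
      next
        case (Suc k)
        have kN: "k \<le> N" using Suc.prems by simp
        have IH: "v (real k * h) - vec (real k * h * (3 * \<eta>)) \<le> Ecomp P f (replicate k h) (v 0)"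
          using Suc.IH kN by blast
        have kh: "real k * h \<in> {0..t}"
        proof -
          have "real k * h \<le> real N * h" using kN hpos by (intro mult_right_mono) auto
          moreover have "0 \<le> real k * h" using hpos by simp
          ultimately show ?thesis using Nh by simp
        qed
        define c where "c = real k * h * (3 * \<eta>)"
        have h0: "0 \<le> h" using hpos by simp
        have "Eop P f h (v (real k * h)) - vec c \<le> Eop P f h (v (real k * h) - vec c)"
          by (rule E_shift_ge[OF h0])
        also have "\<dots> \<le> Eop P f h (Ecomp P f (replicate k h) (v 0))"
          by (rule E_mono[OF h0]) (use IH in \<open>simp only: c_def\<close>)
        also have "\<dots> = Ecomp P f (replicate (Suc k) h) (v 0)" by simp
        finally have 1: "Eop P f h (v (real k * h)) - vec c \<le> Ecomp P f (replicate (Suc k) h) (v 0)" .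
        have 2: "v (real (Suc k) * h) - vec (real (Suc k) * h * (3 * \<eta>)) \<le> Eop P f h (v (real k * h)) - vec c"
          unfolding less_eq_vec_def
        proof
          fix j
          have st: "v (real k * h + h) $ j - 3 * h * \<eta> \<le> Eop P f h (v (real k * h)) $ j" by (rule step[OF kh])
          have e1: "real (Suc k) * h = real k * h + h" by (simp add: distrib_right)
          have e2: "(real k * h + h) * (3 * \<eta>) = c + 3 * h * \<eta>" by (simp add: c_def distrib_right)
          show "(v (real (Suc k) * h) - vec (real (Suc k) * h * (3 * \<eta>))) $ j \<le> (Eop P f h (v (real k * h)) - vec c) $ j"
            using st by (simp only: e1 e2 vector_minus_component vec_component)
        qed
        from 2 1 show ?case by (rule order_trans)
      qed
      have pi: "(\<lambda>k. real k * h) ` {0..N} \<in> partitions_at t"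
        using uniform_partition[OF hpos, of N] unfolding Nh .
      have eE: "Epi P f ((\<lambda>k. real k * h) ` {0..N}) (v 0) = Ecomp P f (replicate N h) (v 0)"
        using Epi_uniform[OF hpos N1, of P f] by (rule fun_cong)
      have "v (real N * h) - vec (real N * h * (3 * \<eta>)) \<le> Ecomp P f (replicate N h) (v 0)"
        by (rule ind) simp
      then have "v t - vec (t * (3 * \<eta>)) \<le> Epi P f ((\<lambda>k. real k * h) ` {0..N}) (v 0)"
        unfolding Nh eE .
      also have "\<dots> \<le> nisio P f t (v 0)" by (rule ge_Epi[OF pi])
      finally have "(v t - vec (t * (3 * \<eta>))) $ i \<le> nisio P f t (v 0) $ i" by (simp only: less_eq_vec_def)
      then have "v t $ i - t * (3 * \<eta>) \<le> nisio P f t (v 0) $ i" by simp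
      moreover have "t * (3 * \<eta>) \<le> \<epsilon>"
      proof -
        have "t * (3 * \<eta>) = \<epsilon> * (t / (t + 1))" using t by (simp add: \<eta>_def field_simps)
        also have "\<dots> \<le> \<epsilon> * 1"
        proof (rule mult_left_mono)
          show "t / (t + 1) \<le> 1" using t by simp
        qed (use \<epsilon> in simp)
        finally show ?thesis by simp
      qed
      ultimately show ?thesis by linarith
    qed
    show ?thesis unfolding less_eq_vec_def
    proof
      fix i
      show "v t $ i \<le> nisio P f t (v 0) $ i"
      proof (rule field_le_epsilon)
        fix e :: real assume "0 < e"
        then show "v t $ i \<le> nisio P f t (v 0) $ i + e" by (rule main)
      qed
    qed
  qed
qed


lemma sol_eq:
  assumes der: "\<forall>t\<ge>0. (v has_vector_derivative v' t) (at t within {0..})"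
    and eq: "\<forall>t\<ge>0. v' t = Qop P f (v t)"
    and t: "0 \<le> t"
  shows "v t = nisio P f t (v 0)"
  by (rule antisym[OF nisio_lower[OF der eq t] nisio_upper[OF der eq t]])

lemma sol_exists_nisio:
  obtains y where "y 0 = u0" "\<forall>t\<ge>0. (y has_vector_derivative Qop P f (y t)) (at t within {0..})"
    "\<forall>t\<ge>0. \<forall>i. - norm u0 \<le> y t $ i \<and> y t $ i \<le> norm u0"
    "\<forall>t\<ge>0. nisio P f t u0 = y t"
proof -
  have box: "\<forall>i. - norm u0 \<le> u0 $ i \<and> u0 $ i \<le> norm u0"
  proof
    fix i
    have "\<bar>u0 $ i\<bar> \<le> norm u0" by (rule component_le_norm_cart)
    then show "- norm u0 \<le> u0 $ i \<and> u0 $ i \<le> norm u0"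
      using abs_le_D1[of "u0 $ i" "norm u0"] abs_le_D2[of "u0 $ i" "norm u0"] by linarith
  qed
  obtain y where y: "y 0 = u0" "\<forall>t\<ge>0. (y has_vector_derivative Qop P f (y t)) (at t within {0..})"
    "\<forall>t\<ge>0. \<forall>i. - norm u0 \<le> y t $ i \<and> y t $ i \<le> norm u0"
    using exists_sol[OF box] by blast
  have "\<forall>t\<ge>0. nisio P f t u0 = y t"
  proof (intro allI impI)
    fix t :: real assume t: "0 \<le> t"
    have "y t = nisio P f t (y 0)" by (rule sol_eq[OF y(2) _ t]) simp
    then show "nisio P f t u0 = y t" using y(1) by simp
  qed
  with y that show ?thesis by blast
qed

lemma conj3:
  "classical_solution (Qop P f) u0 (\<lambda>t. nisio P f t u0)
   \<and> (\<forall>v. classical_solution (Qop P f) u0 v \<longrightarrow> (\<forall>t\<ge>0. v t = nisio P f t u0))"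
proof
  obtain y where y: "y 0 = u0" "\<forall>t\<ge>0. (y has_vector_derivative Qop P f (y t)) (at t within {0..})"
    "\<forall>t\<ge>0. \<forall>i. - norm u0 \<le> y t $ i \<and> y t $ i \<le> norm u0" "\<forall>t\<ge>0. nisio P f t u0 = y t"
    by (rule sol_exists_nisio)
  show "classical_solution (Qop P f) u0 (\<lambda>t. nisio P f t u0)"
    unfolding classical_solution_def
  proof (intro conjI)
    show "\<exists>u'. (\<forall>t\<ge>0. ((\<lambda>t. nisio P f t u0) has_vector_derivative u' t) (at t within {0..})) \<and>
          continuous_on {0..} u' \<and> (\<forall>t\<ge>0. u' t = Qop P f (nisio P f t u0))"
    proof (intro exI[of _ "\<lambda>t. Qop P f (y t)"] conjI allI impI)
      fix t :: real assume t: "0 \<le> t"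
      show "((\<lambda>t. nisio P f t u0) has_vector_derivative Qop P f (y t)) (at t within {0..})"
      proof (rule has_vector_derivative_transform[of t "{0..}" "\<lambda>t. nisio P f t u0" y])
        show "t \<in> {0..}" using t by simp
        show "\<And>x. x \<in> {0..} \<Longrightarrow> nisio P f x u0 = y x" using y(4) by simp
        show "(y has_vector_derivative Qop P f (y t)) (at t within {0..})" using y(2) t by simp
      qed
    next
      show "continuous_on {0..} (\<lambda>t. Qop P f (y t))"
        by (rule continuous_on_compose2[OF Q_cont cont_of_der[OF y(2)]]) auto
    next
      fix t :: real assume t: "0 \<le> t"
      show "Qop P f (y t) = Qop P f (nisio P f t u0)" using y(4) t by simp
    qed
    show "nisio P f 0 u0 = u0" using y(1) y(4) by simp
  qed
  show "\<forall>v. classical_solution (Qop P f) u0 v \<longrightarrow> (\<forall>t\<ge>0. v t = nisio P f t u0)"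
  proof (intro allI impI)
    fix v :: "real \<Rightarrow> real^'n" and t :: real assume "classical_solution (Qop P f) u0 v" and t: "0 \<le> t"
    then obtain v' where v: "\<forall>t\<ge>0. (v has_vector_derivative v' t) (at t within {0..})"
      "\<forall>t\<ge>0. v' t = Qop P f (v t)" "v 0 = u0"
      unfolding classical_solution_def by blast
    show "v t = nisio P f t u0" using sol_eq[OF v(1,2) t] v(3) by simp
  qed
qed

lemma unif_cont:
  assumes K: "compact K" and e: "e > 0"
  shows "\<exists>\<delta>>0. \<forall>h. 0 < h \<and> h < \<delta> \<longrightarrow> (\<forall>u\<in>K. infnorm (nisio P f h u - u) < e)"
proof -
  obtain R where R: "\<forall>u\<in>K. norm u \<le> R" using compact_imp_bounded[OF K] unfolding bounded_iff by auto
  define R' where "R' = real CARD('n) * max R 0"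
  have "compact (Qop P f ` cball 0 R')"
    by (intro compact_continuous_image continuous_on_subset[OF Q_cont]) auto
  then obtain M where M0: "\<forall>w\<in>Qop P f ` cball 0 R'. norm w \<le> M"
    using compact_imp_bounded bounded_iff by metis
  have M: "norm (Qop P f z) \<le> M" if "norm z \<le> R'" for z using M0 that by auto
  have "norm (Qop P f 0) \<le> M" by (rule M) (simp add: R'_def)
  then have Mnn: "M \<ge> 0" using norm_ge_zero[of "Qop P f 0"] by linarith
  define M' where "M' = real CARD('n) * M + 1"
  have M'pos: "M' > 0" using Mnn by (simp add: M'_def add_nonneg_pos)
  show ?thesis
  proof (intro exI conjI allI impI ballI)
    show "e / M' > 0" using e M'pos by simp
    fix h u assume h: "0 < h \<and> h < e / M'" and u: "u \<in> K"
    obtain y where y: "y 0 = u" "\<forall>t\<ge>0. (y has_vector_derivative Qop P f (y t)) (at t within {0..})"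
      "\<forall>t\<ge>0. \<forall>i. - norm u \<le> y t $ i \<and> y t $ i \<le> norm u" "\<forall>t\<ge>0. nisio P f t u = y t"
      by (rule sol_exists_nisio)
    have ny: "norm (y s) \<le> R'" if s: "0 \<le> s" for s
    proof -
      have "norm (y s) \<le> (\<Sum>i\<in>UNIV. \<bar>y s $ i\<bar>)" by (rule norm_le_l1_cart)
      also have "\<dots> \<le> (\<Sum>i\<in>(UNIV::'n set). max R 0)"
      proof (rule sum_mono)
        fix i
        have "- norm u \<le> y s $ i \<and> y s $ i \<le> norm u" using y(3) s by blast
        then have "\<bar>y s $ i\<bar> \<le> norm u" by (intro abs_leI) linarith+
        also have "\<dots> \<le> max R 0" using R u by auto
        finally show "\<bar>y s $ i\<bar> \<le> max R 0" .
      qed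
      finally show ?thesis by (simp add: R'_def)
    qed
    have comp: "\<bar>(y h - u) $ i\<bar> \<le> h * M" for i
    proof -
      obtain x where x: "x \<in> {0..0+h}" "y (0 + h) $ i - y 0 $ i = h * Qop P f (y x) $ i"
        using mvt_comp[OF y(2), of 0 h i] h by auto
      have "\<bar>Qop P f (y x) $ i\<bar> \<le> M"
        using component_le_norm_cart[of "Qop P f (y x)" i] M[OF ny[of x]] x by auto
      then have "h * \<bar>Qop P f (y x) $ i\<bar> \<le> h * M" using h by (intro mult_left_mono) auto
      then show ?thesis using x(2) y(1) h by (simp add: abs_mult)
    qed
    have "infnorm (nisio P f h u - u) \<le> norm (y h - u)" using y(4) h infnorm_le_norm by auto
    also have "\<dots> \<le> (\<Sum>i\<in>UNIV. \<bar>(y h - u) $ i\<bar>)" by (rule norm_le_l1_cart)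
    also have "\<dots> \<le> (\<Sum>i\<in>(UNIV::'n set). h * M)" by (intro sum_mono comp)
    also have "\<dots> = h * (real CARD('n) * M)" by simp
    also have "\<dots> < h * M'" using h by (simp add: M'_def)
    also have "\<dots> < e" using h M'pos by (simp add: field_simps)
    finally show "infnorm (nisio P f h u - u) < e" .
  qed
qed

end

theorem mainTheorem14:
  fixes P :: "(real^'n^'n) set" and f :: "real^'n^'n \<Rightarrow> real^'n" and q0 :: "real^'n^'n"
  assumes Qmat: "\<forall>q\<in>P. is_Q_matrix q"
    and q0: "q0 \<in> P" and fq0: "f q0 = 0" and fle: "\<forall>q\<in>P. f q \<le> 0"
    and Qfin: "\<forall>u i. bdd_above ((\<lambda>q. (q *v u + f q) $ i) ` P)"
  shows "(\<forall>h\<ge>0. \<forall>u i. bdd_above ((\<lambda>q. Sq q (f q) h u $ i) ` P))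
       \<and> (\<forall>t\<ge>0. \<forall>u i. bdd_above ((\<lambda>\<pi>. Epi P f \<pi> u $ i) ` partitions_at t))
       \<and> (\<forall>u0. classical_solution (Qop P f) u0 (\<lambda>t. nisio P f t u0)
            \<and> (\<forall>v. classical_solution (Qop P f) u0 v \<longrightarrow> (\<forall>t\<ge>0. v t = nisio P f t u0)))
       \<and> (\<forall>K. compact K \<longrightarrow> (\<forall>\<epsilon>>0. \<exists>\<delta>>0. \<forall>h. 0 < h \<and> h < \<delta> \<longrightarrow>
              (\<forall>u\<in>K. infnorm (nisio P f h u - u) < \<epsilon>)))"
proof -
  interpret nis P f q0 by (unfold_locales) (use assms in auto)
  show ?thesis
  proof (intro conjI)
    show "\<forall>h\<ge>0. \<forall>u i. bdd_above ((\<lambda>q. Sq q (f q) h u $ i) ` P)" by (intro allI impI Sq_bdd)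
    show "\<forall>t\<ge>0. \<forall>u i. bdd_above ((\<lambda>\<pi>. Epi P f \<pi> u $ i) ` partitions_at t)" by (intro allI impI Epi_bdd)
    show "\<forall>u0. classical_solution (Qop P f) u0 (\<lambda>t. nisio P f t u0)
            \<and> (\<forall>v. classical_solution (Qop P f) u0 v \<longrightarrow> (\<forall>t\<ge>0. v t = nisio P f t u0))"
      by (intro allI conj3)
    show "\<forall>K. compact K \<longrightarrow> (\<forall>\<epsilon>>0. \<exists>\<delta>>0. \<forall>h. 0 < h \<and> h < \<delta> \<longrightarrow>
              (\<forall>u\<in>K. infnorm (nisio P f h u - u) < \<epsilon>))"
      by (intro allI impI unif_cont)
  qed
qed

end
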